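(* Let $S$ be an irreducible constraint over an alphabet $\Sigma$, let $\{\Sigma_0,\Sigma_1\}$ be a partition of $\Sigma$, and let $n_0,n_1,r$ be positive integers. There exists a deterministic $(S,n_0,n_1)$-VLE whose edges all have length at most $r$ if and only if $S$ is presented by an irreducible deterministic VLG $H=(V,E,L)$ whose edges all have length at most $r$ and such that $V$ contains a subset of principal states with respect to $(n_0,n_1)$.
   Context: A constraint over $\Sigma$ is the set of all words generated (by reading edge labels) along finite paths of some finite directed graph with edges labeled by symbols of $\Sigma$; it is irreducible if it can be presented by a deterministic (no two outgoing edges of a state share a label) strongly connected such graph. A variable-length graph (VLG) $H=(V,E,L)$ is a finite directed multigraph whose edges are labeled by nonempty finite words over $\Sigma$; the length of an edge is the length of its label. The constraint $S(H)$ presented by $H$ is the set of all consecutive sub-words of words obtained by concatenating labels along finite paths of $H$. $H$ is deterministic if for each state the labels of its outgoing edges form a prefix-free list (no label is a prefix of any other label in the list); irreducible if strongly connected; lossless if no two distinct paths with the same initial and terminal state generate the same word. A word over $\Sigma$ is even/odd according to the parity of the number of its symbols in $\Sigma_1$. For integers $n,\ell>0$ and a finite-support integer sequence $\mu$, $\mathsf{K}_\ell(\mu,n)=n^\ell-\sum_{i=1}^{\ell}\mu_i n^{\ell-i}$ (with $0^0=1$). For a pair $(\eta,\omega)$ of finite-support nonnegative integer sequences, put $\mathsf{K}^\pm_\ell=\mathsf{K}_\ell(\eta\pm\omega,n_0\pm n_1)$, let $\mathsf{r}$ be the largest index in the union of their supports (take $\mathsf{r}=0$ if both are zero), and $\mathsf{K}^\pm=\mathsf{K}^\pm_{\mathsf{r}}$.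 An $(S,n_0,n_1)$-VLE is a VLG $\mathcal{E}$ such that: (E1) $\mathcal{E}$ is lossless; (E2) $S(\mathcal{E})\subseteq S$; and, for each state $u$, letting $\eta_\ell(u)$ (resp. $\omega_\ell(u)$) be the number of outgoing edges of $u$ of length $\ell$ with even (resp. odd) label and computing the quantities above for $(\eta(u),\omega(u))$: (E3) $\sum_{\ell\ge1}(\eta_\ell(u)+\omega_\ell(u))/(n_0+n_1)^\ell=1$; (E4) $\mathsf{K}^+_\ell(u)\ge|\mathsf{K}^-_\ell(u)|$ for every $\ell\ge1$. A nonempty subset $V'\subseteq V$ of a VLG $H$ is a set of principal states with respect to $(n_0,n_1)$ if, for every $u\in V'$, letting $(\eta(u|V'),\omega(u|V'))$ be the even/odd length distribution of the labels of the outgoing edges of $u$ in the subgraph of $H$ induced by $V'$ (edges with both endpoints in $V'$), and $\mathsf{K}^\pm_\ell(u),\mathsf{K}^\pm(u),\mathsf{r}(u)$ the corresponding quantities, one has $\mathsf{K}^+(u)\le-|\mathsf{K}^-(u)|$ and $\mathsf{K}^+_\ell(u)\ge|\mathsf{K}^-_\ell(u)|$ for $\ell=1,\dots,\mathsf{r}(u)-1$. *)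

theory Defs
  imports Complex_Main "HOL-Library.Sublist"
begin

text \<open>A variable-length graph (VLG) over symbols of type 'a: a set of states (natural numbers)
  and a list of edges (source, label, target).  Edges are identified by their index in the
  list, so parallel edges with equal labels (multigraph) are allowed.\<close>

type_synonym 'a vlg = "nat set \<times> (nat \<times> 'a list \<times> nat) list"

definition states :: "'a vlg \<Rightarrow> nat set" where "states H = fst H"
definition edges :: "'a vlg \<Rightarrow> (nat \<times> 'a list \<times> nat) list" where "edges H = snd H"

definition esrc :: "'a vlg \<Rightarrow> nat \<Rightarrow> nat" where "esrc H i = fst (edges H ! i)"
definition elab :: "'a vlg \<Rightarrow> nat \<Rightarrow> 'a list" where "elab H i = fst (snd (edges H ! i))"
definition etgt :: "'a vlg \<Rightarrow> nat \<Rightarrow> nat" where "etgt H i = snd (snd (edges H ! i))"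

definition eids :: "'a vlg \<Rightarrow> nat set" where "eids H = {..<length (edges H)}"

definition is_vlg :: "'a set \<Rightarrow> 'a vlg \<Rightarrow> bool" where
  "is_vlg \<Sigma> H \<longleftrightarrow> finite (states H) \<and> states H \<noteq> {} \<and>
     (\<forall>i\<in>eids H. esrc H i \<in> states H \<and> etgt H i \<in> states H \<and>
                  elab H i \<noteq> [] \<and> set (elab H i) \<subseteq> \<Sigma>)"

definition is_path :: "'a vlg \<Rightarrow> nat list \<Rightarrow> bool" where
  "is_path H ps \<longleftrightarrow> set ps \<subseteq> eids H \<and>
     (\<forall>j. Suc j < length ps \<longrightarrow> etgt H (ps ! j) = esrc H (ps ! Suc j))"

definition path_from :: "'a vlg \<Rightarrow> nat \<Rightarrow> nat list \<Rightarrow> nat \<Rightarrow> bool" where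
  "path_from H u ps v \<longleftrightarrow> is_path H ps \<and> u \<in> states H \<and> v \<in> states H \<and>
     (if ps = [] then u = v else esrc H (hd ps) = u \<and> etgt H (last ps) = v)"

definition path_word :: "'a vlg \<Rightarrow> nat list \<Rightarrow> 'a list" where
  "path_word H ps = concat (map (elab H) ps)"

definition path_words :: "'a vlg \<Rightarrow> 'a list set" where
  "path_words H = {path_word H ps | ps. is_path H ps}"

definition vlg_constraint :: "'a vlg \<Rightarrow> 'a list set" where
  "vlg_constraint H = {w. \<exists>ps x y. is_path H ps \<and> x @ w @ y = path_word H ps}"

definition deterministic :: "'a vlg \<Rightarrow> bool" where
  "deterministic H \<longleftrightarrow> (\<forall>i\<in>eids H. \<forall>j\<in>eids H.
      i \<noteq> j \<and> esrc H i = esrc H j \<longrightarrow> \<not> prefix (elab H i) (elab H j))"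

definition strongly_connected :: "'a vlg \<Rightarrow> bool" where
  "strongly_connected H \<longleftrightarrow> (\<forall>u\<in>states H. \<forall>v\<in>states H. \<exists>ps. path_from H u ps v)"

definition lossless :: "'a vlg \<Rightarrow> bool" where
  "lossless H \<longleftrightarrow> (\<forall>u v ps qs. path_from H u ps v \<and> path_from H u qs v \<and>
       path_word H ps = path_word H qs \<longrightarrow> ps = qs)"

definition irreducible_constraint :: "'a set \<Rightarrow> 'a list set \<Rightarrow> bool" where
  "irreducible_constraint \<Sigma> S \<longleftrightarrow> (\<exists>G. is_vlg \<Sigma> G \<and> (\<forall>i\<in>eids G. length (elab G i) = 1) \<and>
       deterministic G \<and> strongly_connected G \<and> S = path_words G)"

definition is_partition2 :: "'a set \<Rightarrow> 'a set \<Rightarrow> 'a set \<Rightarrow> bool" where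
  "is_partition2 \<Sigma> \<Sigma>0 \<Sigma>1 \<longleftrightarrow> \<Sigma>0 \<union> \<Sigma>1 = \<Sigma> \<and> \<Sigma>0 \<inter> \<Sigma>1 = {} \<and> \<Sigma>0 \<noteq> {} \<and> \<Sigma>1 \<noteq> {}"

definition even_word :: "'a set \<Rightarrow> 'a list \<Rightarrow> bool" where
  "even_word \<Sigma>1 w \<longleftrightarrow> even (length (filter (\<lambda>c. c \<in> \<Sigma>1) w))"

text \<open>K_l(mu, n) = n^l - sum_{i=1}^{l} mu_i n^(l-i)   (with 0^0 = 1).\<close>
definition Kfun :: "nat \<Rightarrow> (nat \<Rightarrow> int) \<Rightarrow> int \<Rightarrow> int" where
  "Kfun l \<mu> n = n ^ l - (\<Sum>i=1..l. \<mu> i * n ^ (l - i))"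

definition Kplus :: "nat \<Rightarrow> nat \<Rightarrow> (nat \<Rightarrow> nat) \<Rightarrow> (nat \<Rightarrow> nat) \<Rightarrow> nat \<Rightarrow> int" where
  "Kplus n0 n1 \<eta> \<omega> l = Kfun l (\<lambda>i. int (\<eta> i) + int (\<omega> i)) (int n0 + int n1)"

definition Kminus :: "nat \<Rightarrow> nat \<Rightarrow> (nat \<Rightarrow> nat) \<Rightarrow> (nat \<Rightarrow> nat) \<Rightarrow> nat \<Rightarrow> int" where
  "Kminus n0 n1 \<eta> \<omega> l = Kfun l (\<lambda>i. int (\<eta> i) - int (\<omega> i)) (int n0 - int n1)"

definition rmax :: "(nat \<Rightarrow> nat) \<Rightarrow> (nat \<Rightarrow> nat) \<Rightarrow> nat" where
  "rmax \<eta> \<omega> = (let A = {i. \<eta> i \<noteq> 0} \<union> {i. \<omega> i \<noteq> 0} in if A = {} then 0 else Max A)"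

text \<open>Even/odd length distribution of outgoing edges of u whose target lies in T
  (T = all states gives the plain distribution; T = V' gives the induced one).\<close>
definition eta_dist :: "'a set \<Rightarrow> 'a vlg \<Rightarrow> nat set \<Rightarrow> nat \<Rightarrow> nat \<Rightarrow> nat" where
  "eta_dist \<Sigma>1 H T u l = card {i\<in>eids H. esrc H i = u \<and> etgt H i \<in> T \<and>
       length (elab H i) = l \<and> even_word \<Sigma>1 (elab H i)}"

definition omega_dist :: "'a set \<Rightarrow> 'a vlg \<Rightarrow> nat set \<Rightarrow> nat \<Rightarrow> nat \<Rightarrow> nat" where
  "omega_dist \<Sigma>1 H T u l = card {i\<in>eids H. esrc H i = u \<and> etgt H i \<in> T \<and>
       length (elab H i) = l \<and> \<not> even_word \<Sigma>1 (elab H i)}"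

definition is_VLE :: "'a set \<Rightarrow> 'a set \<Rightarrow> 'a list set \<Rightarrow> nat \<Rightarrow> nat \<Rightarrow> 'a vlg \<Rightarrow> bool" where
  "is_VLE \<Sigma> \<Sigma>1 S n0 n1 E \<longleftrightarrow> is_vlg \<Sigma> E \<and> lossless E \<and> vlg_constraint E \<subseteq> S \<and>
     (\<forall>u\<in>states E.
        let \<eta> = eta_dist \<Sigma>1 E (states E) u; \<omega> = omega_dist \<Sigma>1 E (states E) u in
        (\<Sum>l=1..rmax \<eta> \<omega>. real (\<eta> l + \<omega> l) / real (n0 + n1) ^ l) = 1 \<and>
        (\<forall>l\<ge>1. Kplus n0 n1 \<eta> \<omega> l \<ge> \<bar>Kminus n0 n1 \<eta> \<omega> l\<bar>))"

definition principal_states :: "'a set \<Rightarrow> nat \<Rightarrow> nat \<Rightarrow> 'a vlg \<Rightarrow> nat set \<Rightarrow> bool" where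
  "principal_states \<Sigma>1 n0 n1 H V' \<longleftrightarrow> V' \<noteq> {} \<and> V' \<subseteq> states H \<and>
     (\<forall>u\<in>V'.
        let \<eta> = eta_dist \<Sigma>1 H V' u; \<omega> = omega_dist \<Sigma>1 H V' u; r = rmax \<eta> \<omega> in
        Kplus n0 n1 \<eta> \<omega> r \<le> - \<bar>Kminus n0 n1 \<eta> \<omega> r\<bar> \<and>
        (\<forall>l\<in>{1..<r}. Kplus n0 n1 \<eta> \<omega> l \<ge> \<bar>Kminus n0 n1 \<eta> \<omega> l\<bar>))"

definition max_edge_len_le :: "'a vlg \<Rightarrow> nat \<Rightarrow> bool" where
  "max_edge_len_le H r \<longleftrightarrow> (\<forall>i\<in>eids H. length (elab H i) \<le> r)"

end

theory Submission
  imports Defs "HOL-Library.Nat_Bijection"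
begin

fun twalk :: "(nat \<times> 'a list \<times> nat) set \<Rightarrow> nat \<Rightarrow> (nat \<times> 'a list \<times> nat) list \<Rightarrow> nat \<Rightarrow> bool" where
  "twalk A u [] v \<longleftrightarrow> u = v"
| "twalk A u (e # es) v \<longleftrightarrow> e \<in> A \<and> fst e = u \<and> twalk A (snd (snd e)) es v"

definition tword :: "(nat \<times> 'a list \<times> nat) list \<Rightarrow> 'a list" where
  "tword es = concat (map (\<lambda>e. fst (snd e)) es)"

lemma tword_simps[simp]: "tword [] = []" "tword (e#es) = fst (snd e) @ tword es"
  "tword (es@fs) = tword es @ tword fs"
  by (auto simp: tword_def)

lemma twalk_append: "twalk A u (es @ fs) w \<longleftrightarrow> (\<exists>v. twalk A u es v \<and> twalk A v fs w)"
  by (induction es arbitrary: u) auto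

lemma twalk_mono: "twalk A u es v \<Longrightarrow> A \<subseteq> B \<Longrightarrow> twalk B u es v"
  by (induction es arbitrary: u) auto

lemma twalk_set: "twalk A u es v \<Longrightarrow> set es \<subseteq> A"
  by (induction es arbitrary: u) auto

fun walk :: "'a vlg \<Rightarrow> nat \<Rightarrow> nat list \<Rightarrow> nat \<Rightarrow> bool" where
  "walk H u [] v \<longleftrightarrow> u = v"
| "walk H u (i # ps) v \<longleftrightarrow> i \<in> eids H \<and> esrc H i = u \<and> walk H (etgt H i) ps v"

lemma walk_twalk: "walk H u ps v \<Longrightarrow> twalk (set (edges H)) u (map ((!) (edges H)) ps) v"
  by (induction ps arbitrary: u) (auto simp: eids_def esrc_def etgt_def)

lemma walk_word: "path_word H ps = tword (map ((!) (edges H)) ps)"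
  unfolding path_word_def tword_def elab_def by (induction ps) auto

lemma twalk_walk: "twalk (set (edges H)) u es v \<Longrightarrow> \<exists>ps. walk H u ps v \<and> map ((!) (edges H)) ps = es"
proof (induction es arbitrary: u)
  case Nil then show ?case by auto
next
  case (Cons e es)
  then obtain i where i: "i < length (edges H)" "edges H ! i = e" by (auto simp: in_set_conv_nth)
  from Cons obtain ps where "walk H (snd (snd e)) ps v" "map ((!) (edges H)) ps = es" by auto
  then show ?case using i Cons.prems
    by (intro exI[of _ "i # ps"]) (auto simp: eids_def esrc_def etgt_def)
qed

lemma is_path_Cons: "is_path H (i # ps) \<longleftrightarrow> i \<in> eids H \<and> is_path H ps \<and> (ps \<noteq> [] \<longrightarrow> etgt H i = esrc H (hd ps))"
proof
  assume a: "is_path H (i # ps)"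
  have "is_path H ps" unfolding is_path_def
  proof (intro conjI allI impI)
    show "set ps \<subseteq> eids H" using a by (auto simp: is_path_def)
    fix j assume "Suc j < length ps"
    then show "etgt H (ps ! j) = esrc H (ps ! Suc j)" using a[unfolded is_path_def, THEN conjunct2, rule_format, of "Suc j"] by auto
  qed
  moreover have "ps \<noteq> [] \<longrightarrow> etgt H i = esrc H (hd ps)"
    using a[unfolded is_path_def, THEN conjunct2, rule_format, of 0] by (cases ps) auto
  ultimately show "i \<in> eids H \<and> is_path H ps \<and> (ps \<noteq> [] \<longrightarrow> etgt H i = esrc H (hd ps))"
    using a by (auto simp: is_path_def)
next
  assume a: "i \<in> eids H \<and> is_path H ps \<and> (ps \<noteq> [] \<longrightarrow> etgt H i = esrc H (hd ps))"
  show "is_path H (i # ps)" unfolding is_path_def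
  proof (intro conjI allI impI)
    show "set (i # ps) \<subseteq> eids H" using a by (auto simp: is_path_def)
    fix j assume j: "Suc j < length (i # ps)"
    show "etgt H ((i # ps) ! j) = esrc H ((i # ps) ! Suc j)"
    proof (cases j)
      case 0 then show ?thesis using a j by (cases ps) auto
    next
      case (Suc k) then show ?thesis using a j by (auto simp: is_path_def)
    qed
  qed
qed

lemma is_path_Nil[simp]: "is_path H []" by (auto simp: is_path_def)

lemma walk_is_path: "walk H u ps v \<Longrightarrow> is_path H ps \<and> (ps \<noteq> [] \<longrightarrow> esrc H (hd ps) = u \<and> etgt H (last ps) = v) \<and> (ps = [] \<longrightarrow> u = v)"
proof (induction ps arbitrary: u)
  case Nil then show ?case by auto
next
  case (Cons i ps)
  then show ?case by (cases ps) (auto simp: is_path_Cons)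
qed

lemma is_path_walk: "is_path H ps \<Longrightarrow> ps \<noteq> [] \<Longrightarrow> walk H (esrc H (hd ps)) ps (etgt H (last ps))"
proof (induction ps)
  case Nil then show ?case by auto
next
  case (Cons i ps)
  then show ?case by (cases ps) (auto simp: is_path_Cons)
qed

lemma path_from_walk: "path_from H u ps v \<longleftrightarrow> walk H u ps v \<and> u \<in> states H \<and> v \<in> states H"
  unfolding path_from_def
  by (metis is_path_walk walk.simps(1) walk_is_path)

definition tA :: "'a vlg \<Rightarrow> (nat \<times> 'a list \<times> nat) set" where "tA H = set (edges H)"

lemma vlgc_twalk: "vlg_constraint H = {w. \<exists>u es v x y. twalk (tA H) u es v \<and> x @ w @ y = tword es}"
proof -
  have 1: "\<exists>u es v x y. twalk (tA H) u es v \<and> x @ w @ y = tword es" if w: "w \<in> vlg_constraint H" for w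
  proof -
    obtain ps x y where p: "is_path H ps" "x @ w @ y = path_word H ps" using w by (auto simp: vlg_constraint_def)
    show ?thesis
    proof (cases "ps = []")
      case True then show ?thesis using p by (intro exI[of _ 0] exI[of _ "[]"]) (auto simp: path_word_def)
    next
      case False
      then show ?thesis using p is_path_walk[OF p(1) False] walk_twalk walk_word tA_def by metis
    qed
  qed
  have 2: "w \<in> vlg_constraint H" if w: "\<exists>u es v x y. twalk (tA H) u es v \<and> x @ w @ y = tword es" for w
  proof -
    obtain u es v x y where "twalk (tA H) u es v" "x @ w @ y = tword es" using w by blast
    then show ?thesis unfolding vlg_constraint_def tA_def
      by (metis (mono_tags, lifting) mem_Collect_eq twalk_walk walk_is_path walk_word)
  qed
  show ?thesis using 1 2 by blast
qed

lemma path_words_twalk: "path_words H = {tword es | es. \<exists>u v. twalk (tA H) u es v}"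
proof -
  have 1: "\<exists>es. w = tword es \<and> (\<exists>u v. twalk (tA H) u es v)" if w: "w \<in> path_words H" for w
  proof -
    obtain ps where p: "is_path H ps" "w = path_word H ps" using w by (auto simp: path_words_def)
    show ?thesis
    proof (cases "ps = []")
      case True then show ?thesis using p by (intro exI[of _ "[]"]) (auto simp: path_word_def)
    next
      case False
      then show ?thesis using p is_path_walk[OF p(1) False] walk_twalk walk_word tA_def by metis
    qed
  qed
  have 2: "w \<in> path_words H" if "\<exists>es. w = tword es \<and> (\<exists>u v. twalk (tA H) u es v)" for w
    using that unfolding path_words_def tA_def
    by (metis (mono_tags, lifting) mem_Collect_eq twalk_walk walk_is_path walk_word)
  show ?thesis using 1 2 by blast
qed

lemma sc_twalk: "strongly_connected H \<longleftrightarrow> (\<forall>u\<in>states H. \<forall>v\<in>states H. \<exists>es. twalk (tA H) u es v)"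
  unfolding strongly_connected_def path_from_walk tA_def
  by (metis twalk_walk walk_twalk)

definition tdet :: "(nat \<times> 'a list \<times> nat) set \<Rightarrow> bool" where
  "tdet A \<longleftrightarrow> (\<forall>e1\<in>A. \<forall>e2\<in>A. e1 \<noteq> e2 \<and> fst e1 = fst e2 \<longrightarrow> \<not> prefix (fst (snd e1)) (fst (snd e2)))"

lemma det_distinct: "deterministic H \<Longrightarrow> distinct (edges H)"
  unfolding deterministic_def distinct_conv_nth eids_def esrc_def elab_def
  by (metis lessThan_iff prefix_order.refl)

lemma det_tdet: "distinct (edges H) \<Longrightarrow> deterministic H \<longleftrightarrow> tdet (tA H)"
  unfolding deterministic_def tdet_def eids_def esrc_def elab_def tA_def
  by (smt (verit, ccfv_threshold) in_set_conv_nth lessThan_iff nth_eq_iff_index_eq)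

definition labne :: "(nat \<times> 'a list \<times> nat) set \<Rightarrow> bool" where
  "labne A \<longleftrightarrow> (\<forall>e\<in>A. fst (snd e) \<noteq> [])"

lemma tdet_prefix:
  assumes "tdet A" "labne A" "twalk A u es v" "twalk A u fs w" "prefix (tword es) (tword fs)"
  shows "prefix es fs"
  using assms(3-5)
proof (induction es arbitrary: u fs)
  case Nil then show ?case by auto
next
  case (Cons e es)
  show ?case
  proof (cases fs)
    case Nil
    then show ?thesis using Cons.prems assms(2) by (auto simp: labne_def)
  next
    case (Cons f fs')
    have p1: "prefix (fst (snd e)) (tword fs)" using Cons.prems(3)
      by (metis prefix_order.trans prefixI tword_simps(2))
    have p2: "prefix (fst (snd f)) (tword fs)" using Cons by simp
    have ef: "e \<in> A" "f \<in> A" "fst e = fst f" using Cons.prems Cons by auto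
    have "e = f"
    proof (rule ccontr)
      assume "e \<noteq> f"
      then show False using prefix_same_cases[OF p1 p2] assms(1) ef unfolding tdet_def by metis
    qed
    then show ?thesis using Cons.IH[of "snd (snd e)" fs'] Cons.prems Cons by auto
  qed
qed

lemma tdet_unique:
  assumes "tdet A" "labne A" "twalk A u es v" "twalk A u fs w" "tword es = tword fs"
  shows "es = fs"
  using tdet_prefix[OF assms(1-4)] tdet_prefix[OF assms(1,2,4,3)] assms(5)
  by (simp add: prefix_order.antisym)

lemma twalk_end: "twalk A u es v \<Longrightarrow> twalk A u es w \<Longrightarrow> v = w"
  by (induction es arbitrary: u) auto

lemma det_lossless:
  assumes "deterministic H" "labne (tA H)"
  shows "lossless H"
  unfolding lossless_def
proof (intro allI impI)
  fix u v ps qs assume a: "path_from H u ps v \<and> path_from H u qs v \<and> path_word H ps = path_word H qs"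
  have d: "distinct (edges H)" using det_distinct[OF assms(1)] .
  have t: "tdet (tA H)" using det_tdet[OF d] assms(1) by simp
  have w1: "walk H u ps v" "walk H u qs v" using a path_from_walk by metis+
  have "map ((!) (edges H)) ps = map ((!) (edges H)) qs"
    apply (rule tdet_unique[OF t assms(2) walk_twalk[OF w1(1), folded tA_def] walk_twalk[OF w1(2), folded tA_def]])
    using a walk_word by metis
  moreover have "set ps \<subseteq> {..<length (edges H)}" "set qs \<subseteq> {..<length (edges H)}"
    using a unfolding path_from_def is_path_def eids_def by auto
  moreover have "inj_on ((!) (edges H)) (set ps \<union> set qs)"
    using inj_on_nth[OF d, of "set ps \<union> set qs"] calculation(2,3) by auto
  ultimately show "ps = qs"
    using inj_on_map_eq_map by blast
qed

lemma card_idx: "distinct xs \<Longrightarrow> card {i. i < length xs \<and> P (xs ! i)} = card {x \<in> set xs. P x}"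
proof -
  assume d: "distinct xs"
  have "inj_on ((!) xs) {i. i < length xs \<and> P (xs ! i)}"
    using inj_on_nth[OF d] by auto
  moreover have "(!) xs ` {i. i < length xs \<and> P (xs ! i)} = {x \<in> set xs. P x}"
    by (auto simp: in_set_conv_nth)
  ultimately show ?thesis by (metis card_image)
qed

lemma eta_dist_t: "distinct (edges H) \<Longrightarrow> eta_dist \<Sigma>1 H T u l =
   card {e \<in> tA H. fst e = u \<and> snd (snd e) \<in> T \<and> length (fst (snd e)) = l \<and> even_word \<Sigma>1 (fst (snd e))}"
  unfolding eta_dist_def eids_def esrc_def etgt_def elab_def tA_def
  using card_idx[of "edges H" "\<lambda>e. fst e = u \<and> snd (snd e) \<in> T \<and> length (fst (snd e)) = l \<and> even_word \<Sigma>1 (fst (snd e))"]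
  by (simp add: lessThan_def)

lemma omega_dist_t: "distinct (edges H) \<Longrightarrow> omega_dist \<Sigma>1 H T u l =
   card {e \<in> tA H. fst e = u \<and> snd (snd e) \<in> T \<and> length (fst (snd e)) = l \<and> \<not> even_word \<Sigma>1 (fst (snd e))}"
  unfolding omega_dist_def eids_def esrc_def etgt_def elab_def tA_def
  using card_idx[of "edges H" "\<lambda>e. fst e = u \<and> snd (snd e) \<in> T \<and> length (fst (snd e)) = l \<and> \<not> even_word \<Sigma>1 (fst (snd e))"]
  by (simp add: lessThan_def)

lemma ball_eids: "(\<forall>i\<in>eids H. P (edges H ! i)) \<longleftrightarrow> (\<forall>e\<in>tA H. P e)"
  unfolding eids_def tA_def
proof
  assume "\<forall>i\<in>{..<length (edges H)}. P (edges H ! i)"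
  then show "\<forall>e\<in>set (edges H). P e" by (metis in_set_conv_nth lessThan_iff)
next
  assume "\<forall>e\<in>set (edges H). P e"
  then show "\<forall>i\<in>{..<length (edges H)}. P (edges H ! i)" by simp
qed

lemma is_vlg_t: "is_vlg \<Sigma> H \<longleftrightarrow> finite (states H) \<and> states H \<noteq> {} \<and>
   (\<forall>e\<in>tA H. fst e \<in> states H \<and> snd (snd e) \<in> states H \<and> fst (snd e) \<noteq> [] \<and> set (fst (snd e)) \<subseteq> \<Sigma>)"
  unfolding is_vlg_def esrc_def etgt_def elab_def
  using ball_eids[of H "\<lambda>e. fst e \<in> states H \<and> snd (snd e) \<in> states H \<and> fst (snd e) \<noteq> [] \<and> set (fst (snd e)) \<subseteq> \<Sigma>"]
  by simp

lemma maxlen_t: "max_edge_len_le H r \<longleftrightarrow> (\<forall>e\<in>tA H. length (fst (snd e)) \<le> r)"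
  unfolding max_edge_len_le_def elab_def
  using ball_eids[of H "\<lambda>e. length (fst (snd e)) \<le> r"] by simp


lemma Kfun_0[simp]: "Kfun 0 \<mu> n = 1"
  by (simp add: Kfun_def)

lemma Kfun_Suc: "Kfun (Suc l) \<mu> n = n * Kfun l \<mu> n - \<mu> (Suc l)"
proof -
  have "(\<Sum>i=1..Suc l. \<mu> i * n ^ (Suc l - i)) = (\<Sum>i=1..l. \<mu> i * n ^ (Suc l - i)) + \<mu> (Suc l)"
    by (simp add: sum.cl_ivl_Suc)
  also have "(\<Sum>i=1..l. \<mu> i * n ^ (Suc l - i)) = n * (\<Sum>i=1..l. \<mu> i * n ^ (l - i))"
    unfolding sum_distrib_left
    by (rule sum.cong) (auto simp: Suc_diff_le)
  finally show ?thesis by (simp add: Kfun_def algebra_simps)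
qed

lemma Kfun_cong: "(\<And>i. 1 \<le> i \<Longrightarrow> i \<le> l \<Longrightarrow> \<mu> i = \<mu>' i) \<Longrightarrow> Kfun l \<mu> n = Kfun l \<mu>' n"
  unfolding Kfun_def by (auto intro!: sum.cong)

lemma Kfun_tail:
  assumes "\<And>i. i > R \<Longrightarrow> \<mu> i = 0" "R \<le> l"
  shows "Kfun l \<mu> n = n ^ (l - R) * Kfun R \<mu> n"
  using assms(2)
proof (induction l rule: dec_induct)
  case base then show ?case by simp
next
  case (step l)
  then show ?case using assms(1)[of "Suc l"] by (simp add: Kfun_Suc Suc_diff_le)
qed

lemma Kfun_real:
  assumes "n > 0"
  shows "real_of_int (Kfun R \<mu> n) = real_of_int n ^ R * (1 - (\<Sum>l=1..R. real_of_int (\<mu> l) / real_of_int n ^ l))"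
proof -
  have "real_of_int n ^ R * (\<Sum>l=1..R. real_of_int (\<mu> l) / real_of_int n ^ l) =
        (\<Sum>l=1..R. real_of_int (\<mu> l) * real_of_int n ^ (R - l))"
    unfolding sum_distrib_left
    by (rule sum.cong) (use assms in \<open>auto simp: power_diff\<close>)
  then show ?thesis by (simp add: Kfun_def algebra_simps)
qed

lemma Kfun_zero_iff:
  assumes "n > 0"
  shows "Kfun R \<mu> n = 0 \<longleftrightarrow> (\<Sum>l=1..R. real_of_int (\<mu> l) / real_of_int n ^ l) = 1"
proof -
  have "real_of_int n ^ R \<noteq> 0" using assms by simp
  then show ?thesis using Kfun_real[OF assms, of R \<mu>]
    by (metis eq_iff_diff_eq_0 mult_eq_0_iff of_int_eq_0_iff)
qed

lemma K_even: "even (Kplus n0 n1 \<eta> \<omega> l + Kminus n0 n1 \<eta> \<omega> l)"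
proof (induction l)
  case 0 then show ?case by (simp add: Kplus_def Kminus_def)
next
  case (Suc l)
  let ?P = "Kplus n0 n1 \<eta> \<omega> l" and ?M = "Kminus n0 n1 \<eta> \<omega> l"
  have "Kplus n0 n1 \<eta> \<omega> (Suc l) + Kminus n0 n1 \<eta> \<omega> (Suc l) =
        (int n0 + int n1) * (?P + ?M) - 2 * (int n1 * ?M + int (\<eta> (Suc l)))"
    by (simp add: Kplus_def Kminus_def Kfun_Suc algebra_simps)
  then show ?case using Suc by simp
qed

lemma rmax_zero:
  assumes "finite {i. \<eta> i \<noteq> 0}" "finite {i. \<omega> i \<noteq> 0}" "i > rmax \<eta> \<omega>"
  shows "\<eta> i = 0 \<and> \<omega> i = 0"
proof (rule ccontr)
  assume a: "\<not> (\<eta> i = 0 \<and> \<omega> i = 0)"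
  let ?A = "{i. \<eta> i \<noteq> 0} \<union> {i. \<omega> i \<noteq> 0}"
  have "i \<in> ?A" using a by auto
  then have "i \<le> Max ?A" using assms by auto
  then show False using assms(3) \<open>i \<in> ?A\<close> unfolding rmax_def Let_def by (auto split: if_splits)
qed

lemma rmax_le:
  assumes "\<And>i. i > R \<Longrightarrow> \<eta> i = 0 \<and> \<omega> i = 0"
  shows "rmax \<eta> \<omega> \<le> R"
proof -
  let ?A = "{i. \<eta> i \<noteq> 0} \<union> {i. \<omega> i \<noteq> 0}"
  have "?A \<subseteq> {..R}" using assms by (auto simp: not_less[symmetric])
  then have "finite ?A" using finite_subset by blast
  then show ?thesis using \<open>?A \<subseteq> {..R}\<close> unfolding rmax_def Let_def by auto
qed


lemma tdet_mono: "tdet B \<Longrightarrow> A \<subseteq> B \<Longrightarrow> tdet A"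
  unfolding tdet_def by blast

lemma eta_fin: "finite {l. eta_dist \<Sigma>1 H T u l \<noteq> 0}"
proof -
  have "{l. eta_dist \<Sigma>1 H T u l \<noteq> 0} \<subseteq> (\<lambda>i. length (elab H i)) ` eids H"
  proof
    fix l assume l: "l \<in> {l. eta_dist \<Sigma>1 H T u l \<noteq> 0}"
    show "l \<in> (\<lambda>i. length (elab H i)) ` eids H"
    proof (rule ccontr)
      assume "l \<notin> (\<lambda>i. length (elab H i)) ` eids H"
      then have "{i\<in>eids H. esrc H i = u \<and> etgt H i \<in> T \<and> length (elab H i) = l \<and> even_word \<Sigma>1 (elab H i)} = {}" (is "?X = {}")
        by auto
      then show False using l unfolding eta_dist_def mem_Collect_eq by (simp only: card.empty)
    qed
  qed
  then show ?thesis by (rule finite_subset) (simp add: eids_def)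
qed

lemma omega_fin: "finite {l. omega_dist \<Sigma>1 H T u l \<noteq> 0}"
proof -
  have "{l. omega_dist \<Sigma>1 H T u l \<noteq> 0} \<subseteq> (\<lambda>i. length (elab H i)) ` eids H"
  proof
    fix l assume l: "l \<in> {l. omega_dist \<Sigma>1 H T u l \<noteq> 0}"
    show "l \<in> (\<lambda>i. length (elab H i)) ` eids H"
    proof (rule ccontr)
      assume "l \<notin> (\<lambda>i. length (elab H i)) ` eids H"
      then have "{i\<in>eids H. esrc H i = u \<and> etgt H i \<in> T \<and> length (elab H i) = l \<and> \<not> even_word \<Sigma>1 (elab H i)} = {}" (is "?X = {}")
        by auto
      then show False using l unfolding omega_dist_def mem_Collect_eq by (simp only: card.empty)
    qed
  qed
  then show ?thesis by (rule finite_subset) (simp add: eids_def)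
qed

lemma key_ineq:
  fixes nn mm P M :: int
  assumes "nn \<ge> \<bar>mm\<bar>" "P \<ge> \<bar>M\<bar>"
  shows "nn * P + mm * M \<ge> 0" "nn * P - mm * M \<ge> 0"
proof -
  have "nn * P \<ge> \<bar>mm\<bar> * \<bar>M\<bar>" using assms by (intro mult_mono) auto
  moreover have "\<bar>mm * M\<bar> = \<bar>mm\<bar> * \<bar>M\<bar>" by (simp add: abs_mult)
  ultimately show "nn * P + mm * M \<ge> 0" "nn * P - mm * M \<ge> 0" by linarith+
qed

lemma vlgc_mono: "tA E \<subseteq> tA H \<Longrightarrow> vlg_constraint E \<subseteq> vlg_constraint H"
  unfolding vlgc_twalk using twalk_mono by blast

lemma dir2:
  assumes n0: "n0 > 0" and H: "is_vlg \<Sigma> H" "deterministic H" "max_edge_len_le H r"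
    and SH: "vlg_constraint H = S" and pr: "principal_states \<Sigma>1 n0 n1 H V'"
  shows "\<exists>E. is_VLE \<Sigma> \<Sigma>1 S n0 n1 E \<and> deterministic E \<and> max_edge_len_le E r"
proof -
  define A where "A = tA H"
  have dH: "distinct (edges H)" using det_distinct[OF H(2)] .
  have tdH: "tdet A" using det_tdet[OF dH] H(2) A_def by simp
  define \<eta> where "\<eta> u = eta_dist \<Sigma>1 H V' u" for u
  define \<omega> where "\<omega> u = omega_dist \<Sigma>1 H V' u" for u
  define R where "R u = rmax (\<eta> u) (\<omega> u)" for u
  define nn :: int where "nn = int n0 + int n1"
  define mm :: int where "mm = int n0 - int n1"
  define P where "P u = Kplus n0 n1 (\<eta> u) (\<omega> u) (R u - 1)" for u
  define M where "M u = Kminus n0 n1 (\<eta> u) (\<omega> u) (R u - 1)" for u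
  define ke where "ke u = nat ((nn * P u + mm * M u) div 2)" for u
  define ko where "ko u = nat ((nn * P u - mm * M u) div 2)" for u
  define AE where "AE u = {e\<in>A. fst e = u \<and> snd (snd e) \<in> V' \<and> length (fst (snd e)) = R u \<and> even_word \<Sigma>1 (fst (snd e))}" for u
  define AO where "AO u = {e\<in>A. fst e = u \<and> snd (snd e) \<in> V' \<and> length (fst (snd e)) = R u \<and> \<not> even_word \<Sigma>1 (fst (snd e))}" for u
  have finA: "finite A" unfolding A_def tA_def by simp
  have V'sub: "V' \<subseteq> states H" "V' \<noteq> {}" using pr unfolding principal_states_def by auto
  have prU: "Kplus n0 n1 (\<eta> u) (\<omega> u) (R u) \<le> - \<bar>Kminus n0 n1 (\<eta> u) (\<omega> u) (R u)\<bar> \<and>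
        (\<forall>l\<in>{1..<R u}. Kplus n0 n1 (\<eta> u) (\<omega> u) l \<ge> \<bar>Kminus n0 n1 (\<eta> u) (\<omega> u) l\<bar>)" if "u \<in> V'" for u
    using pr that unfolding principal_states_def \<eta>_def \<omega>_def R_def Let_def by auto
  have R1: "R u \<ge> 1" if "u \<in> V'" for u
  proof (rule ccontr)
    assume "\<not> R u \<ge> 1"
    then have "R u = 0" by simp
    then show False using prU[OF that] by (simp add: Kplus_def Kminus_def)
  qed
  have PM: "P u \<ge> \<bar>M u\<bar>" if "u \<in> V'" for u
  proof (cases "R u - 1 = 0")
    case True then show ?thesis by (simp add: P_def M_def Kplus_def Kminus_def)
  next
    case False then show ?thesis using prU[OF that] R1[OF that] unfolding P_def M_def by auto
  qed
  have nnmm: "nn \<ge> \<bar>mm\<bar>" unfolding nn_def mm_def by (simp add: abs_if)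
  have KR: "Kplus n0 n1 (\<eta> u) (\<omega> u) (R u) = nn * P u - (int (\<eta> u (R u)) + int (\<omega> u (R u)))"
           "Kminus n0 n1 (\<eta> u) (\<omega> u) (R u) = mm * M u - (int (\<eta> u (R u)) - int (\<omega> u (R u)))"
    if "u \<in> V'" for u
  proof -
    have e1: "R u = Suc (R u - 1)" using R1[OF that] by simp
    have KS: "Kfun (R u) \<mu> n = n * Kfun (R u - 1) \<mu> n - \<mu> (R u)" for \<mu> n
      using Kfun_Suc[of "R u - 1" \<mu> n, unfolded e1[symmetric]] .
    show "Kplus n0 n1 (\<eta> u) (\<omega> u) (R u) = nn * P u - (int (\<eta> u (R u)) + int (\<omega> u (R u)))"
      unfolding P_def Kplus_def nn_def KS by simp
    show "Kminus n0 n1 (\<eta> u) (\<omega> u) (R u) = mm * M u - (int (\<eta> u (R u)) - int (\<omega> u (R u)))"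
      unfolding M_def Kminus_def mm_def KS by simp
  qed
  have ev: "even (nn * P u + mm * M u)" "even (nn * P u - mm * M u)" for u
  proof -
    have "nn * P u + mm * M u = nn * (P u + M u) - 2 * int n1 * M u"
         "nn * P u - mm * M u = nn * (P u + M u) - 2 * int n0 * M u"
      unfolding nn_def mm_def by (simp_all add: algebra_simps)
    moreover have "even (P u + M u)" unfolding P_def M_def by (rule K_even)
    ultimately show "even (nn * P u + mm * M u)" "even (nn * P u - mm * M u)" by simp_all
  qed
  have ke2: "2 * int (ke u) = nn * P u + mm * M u" and ko2: "2 * int (ko u) = nn * P u - mm * M u"
    if "u \<in> V'" for u
    using key_ineq[OF nnmm PM[OF that]] ev[of u] unfolding ke_def ko_def by auto
  have cardAE: "card (AE u) = \<eta> u (R u)" and cardAO: "card (AO u) = \<omega> u (R u)" for u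
    unfolding AE_def AO_def \<eta>_def \<omega>_def A_def using eta_dist_t[OF dH] omega_dist_t[OF dH] by auto
  have keb: "ke u \<le> card (AE u)" and kob: "ko u \<le> card (AO u)" if "u \<in> V'" for u
  proof -
    have "Kplus n0 n1 (\<eta> u) (\<omega> u) (R u) + Kminus n0 n1 (\<eta> u) (\<omega> u) (R u) \<le> 0"
         "Kplus n0 n1 (\<eta> u) (\<omega> u) (R u) - Kminus n0 n1 (\<eta> u) (\<omega> u) (R u) \<le> 0"
      using prU[OF that] by linarith+
    then show "ke u \<le> card (AE u)" "ko u \<le> card (AO u)"
      using KR[OF that] ke2[OF that] ko2[OF that] cardAE[of u] cardAO[of u] by linarith+
  qed
  have "\<forall>u\<in>V'. \<exists>B. B \<subseteq> AE u \<and> card B = ke u"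
    using keb obtain_subset_with_card_n by metis
  then obtain BE where BE: "\<And>u. u \<in> V' \<Longrightarrow> BE u \<subseteq> AE u \<and> card (BE u) = ke u" by metis
  have "\<forall>u\<in>V'. \<exists>B. B \<subseteq> AO u \<and> card B = ko u"
    using kob obtain_subset_with_card_n by metis
  then obtain BO where BO: "\<And>u. u \<in> V' \<Longrightarrow> BO u \<subseteq> AO u \<and> card (BO u) = ko u" by metis
  define keep where "keep e \<longleftrightarrow> fst e \<in> V' \<and> snd (snd e) \<in> V' \<and>
      (length (fst (snd e)) < R (fst e) \<or> e \<in> BE (fst e) \<or> e \<in> BO (fst e))" for e
  define E :: "'a vlg" where "E = (V', filter keep (edges H))"
  have stE: "states E = V'" and tAE: "tA E = {e\<in>A. keep e}"
    unfolding E_def states_def tA_def A_def edges_def by auto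
  have dE: "distinct (edges E)" unfolding E_def edges_def using dH by (simp add: edges_def)
  have tdE: "tdet (tA E)" using tdet_mono[OF tdH] tAE by auto
  have detE: "deterministic E" using det_tdet[OF dE] tdE by simp
  have HA: "\<forall>e\<in>A. fst e \<in> states H \<and> snd (snd e) \<in> states H \<and> fst (snd e) \<noteq> [] \<and> set (fst (snd e)) \<subseteq> \<Sigma>"
    using H(1) unfolding is_vlg_t A_def by auto
  have finV': "finite V'" using V'sub H(1) unfolding is_vlg_def using finite_subset by blast
  have vlgE: "is_vlg \<Sigma> E" unfolding is_vlg_t stE tAE using HA finV' V'sub keep_def by auto
  have labE: "labne (tA E)" unfolding labne_def tAE using HA by auto
  have losE: "lossless E" using det_lossless[OF detE labE] .
  have conE: "vlg_constraint E \<subseteq> S" using vlgc_mono[of E H] tAE SH A_def by auto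
  have mlE: "max_edge_len_le E r" using H(3) unfolding maxlen_t tAE A_def by auto
  have lenR: "length (fst (snd e)) \<le> R u" if "e \<in> A" "fst e = u" "snd (snd e) \<in> V'" for e u
  proof (rule ccontr)
    assume "\<not> ?thesis"
    then have gt: "length (fst (snd e)) > R u" by simp
    have "\<eta> u (length (fst (snd e))) = 0 \<and> \<omega> u (length (fst (snd e))) = 0"
      using rmax_zero[OF _ _ gt[unfolded R_def]] eta_fin omega_fin unfolding \<eta>_def \<omega>_def by blast
    then show False using that eta_dist_t[OF dH] omega_dist_t[OF dH] finA unfolding \<eta>_def \<omega>_def A_def
      by (cases "even_word \<Sigma>1 (fst (snd e))") (auto simp: card_eq_0_iff)
  qed
  define \<eta>' where "\<eta>' u l = (if l < R u then \<eta> u l else if l = R u then ke u else 0)" for u l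
  define \<omega>' where "\<omega>' u l = (if l < R u then \<omega> u l else if l = R u then ko u else 0)" for u l
  have etaE: "eta_dist \<Sigma>1 E (states E) u = \<eta>' u" and omegaE: "omega_dist \<Sigma>1 E (states E) u = \<omega>' u"
    if "u \<in> V'" for u
  proof -
    have BEs: "BE u \<subseteq> AE u" "card (BE u) = ke u" "BO u \<subseteq> AO u" "card (BO u) = ko u"
      using BE[OF that] BO[OF that] by auto
    show "eta_dist \<Sigma>1 E (states E) u = \<eta>' u"
    proof
      fix l
      let ?X = "{e \<in> tA E. fst e = u \<and> snd (snd e) \<in> V' \<and> length (fst (snd e)) = l \<and> even_word \<Sigma>1 (fst (snd e))}"
      have "eta_dist \<Sigma>1 E (states E) u l = card ?X" using eta_dist_t[OF dE] stE by simp
      also have "card ?X = \<eta>' u l"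
      proof (cases "l < R u")
        case True
        then have "?X = {e \<in> A. fst e = u \<and> snd (snd e) \<in> V' \<and> length (fst (snd e)) = l \<and> even_word \<Sigma>1 (fst (snd e))}"
          unfolding tAE keep_def using that by auto
        then show ?thesis using True eta_dist_t[OF dH] unfolding \<eta>'_def \<eta>_def A_def by simp
      next
        case False
        show ?thesis
        proof (cases "l = R u")
          case True
          have "?X = BE u"
          proof
            show "?X \<subseteq> BE u"
            proof
              fix e assume e: "e \<in> ?X"
              then have "e \<notin> BO u" using BEs(3) unfolding AO_def by auto
              then show "e \<in> BE u" using e True unfolding tAE keep_def by auto
            qed
            show "BE u \<subseteq> ?X" using BEs(1) True that unfolding tAE keep_def AE_def by auto
          qed
          then show ?thesis using True BEs unfolding \<eta>'_def by simp
        next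
          case False
          have X0: "?X = {}"
          proof -
            { fix e assume e: "e \<in> ?X"
              then have "length (fst (snd e)) < R u \<or> e \<in> BE u \<or> e \<in> BO u" unfolding tAE keep_def by auto
              then have "length (fst (snd e)) \<le> R u" using BEs unfolding AE_def AO_def by auto
              then have False using e False \<open>\<not> l < R u\<close> by auto }
            then show ?thesis by blast
          qed
          show ?thesis unfolding X0 using False \<open>\<not> l < R u\<close> unfolding \<eta>'_def by simp
        qed
      qed
      finally show "eta_dist \<Sigma>1 E (states E) u l = \<eta>' u l" .
    qed
    show "omega_dist \<Sigma>1 E (states E) u = \<omega>' u"
    proof
      fix l
      let ?X = "{e \<in> tA E. fst e = u \<and> snd (snd e) \<in> V' \<and> length (fst (snd e)) = l \<and> \<not> even_word \<Sigma>1 (fst (snd e))}"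
      have "omega_dist \<Sigma>1 E (states E) u l = card ?X" using omega_dist_t[OF dE] stE by simp
      also have "card ?X = \<omega>' u l"
      proof (cases "l < R u")
        case True
        then have "?X = {e \<in> A. fst e = u \<and> snd (snd e) \<in> V' \<and> length (fst (snd e)) = l \<and> \<not> even_word \<Sigma>1 (fst (snd e))}"
          unfolding tAE keep_def using that by auto
        then show ?thesis using True omega_dist_t[OF dH] unfolding \<omega>'_def \<omega>_def A_def by simp
      next
        case False
        show ?thesis
        proof (cases "l = R u")
          case True
          have "?X = BO u"
          proof
            show "?X \<subseteq> BO u"
            proof
              fix e assume e: "e \<in> ?X"
              then have "e \<notin> BE u" using BEs(1) unfolding AE_def by auto
              then show "e \<in> BO u" using e True unfolding tAE keep_def by auto
            qed
            show "BO u \<subseteq> ?X" using BEs(3) True that unfolding tAE keep_def AO_def by auto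
          qed
          then show ?thesis using True BEs unfolding \<omega>'_def by simp
        next
          case False
          have X0: "?X = {}"
          proof -
            { fix e assume e: "e \<in> ?X"
              then have "length (fst (snd e)) < R u \<or> e \<in> BE u \<or> e \<in> BO u" unfolding tAE keep_def by auto
              then have "length (fst (snd e)) \<le> R u" using BEs unfolding AE_def AO_def by auto
              then have False using e False \<open>\<not> l < R u\<close> by auto }
            then show ?thesis by blast
          qed
          show ?thesis unfolding X0 using False \<open>\<not> l < R u\<close> unfolding \<omega>'_def by simp
        qed
      qed
      finally show "omega_dist \<Sigma>1 E (states E) u l = \<omega>' u l" .
    qed
  qed
  have cond: "(\<Sum>l=1..rmax (\<eta>' u) (\<omega>' u). real (\<eta>' u l + \<omega>' u l) / real (n0 + n1) ^ l) = 1 \<and>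
        (\<forall>l\<ge>1. Kplus n0 n1 (\<eta>' u) (\<omega>' u) l \<ge> \<bar>Kminus n0 n1 (\<eta>' u) (\<omega>' u) l\<bar>)" if u: "u \<in> V'" for u
  proof -
    have R1u: "R u \<ge> 1" using R1[OF u] .
    have tail: "\<eta>' u i = 0 \<and> \<omega>' u i = 0" if "i > R u" for i using that unfolding \<eta>'_def \<omega>'_def by auto
    have congP: "Kplus n0 n1 (\<eta>' u) (\<omega>' u) l = Kplus n0 n1 (\<eta> u) (\<omega> u) l"
      and congM: "Kminus n0 n1 (\<eta>' u) (\<omega>' u) l = Kminus n0 n1 (\<eta> u) (\<omega> u) l" if "l < R u" for l
      unfolding Kplus_def Kminus_def using that
      by (auto intro!: Kfun_cong simp: \<eta>'_def \<omega>'_def)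
    have P0: "Kplus n0 n1 (\<eta>' u) (\<omega>' u) (R u) = 0" and M0: "Kminus n0 n1 (\<eta>' u) (\<omega>' u) (R u) = 0"
    proof -
      have e1: "R u = Suc (R u - 1)" using R1u by simp
      have "Kplus n0 n1 (\<eta>' u) (\<omega>' u) (R u) = nn * P u - (int (ke u) + int (ko u))"
        using Kfun_Suc[of "R u - 1"] congP[of "R u - 1"] R1u unfolding Kplus_def P_def nn_def
        by (subst e1) (simp add: \<eta>'_def \<omega>'_def)
      then show "Kplus n0 n1 (\<eta>' u) (\<omega>' u) (R u) = 0" using ke2[OF u] ko2[OF u] by linarith
      have "Kminus n0 n1 (\<eta>' u) (\<omega>' u) (R u) = mm * M u - (int (ke u) - int (ko u))"
        using Kfun_Suc[of "R u - 1"] congM[of "R u - 1"] R1u unfolding Kminus_def M_def mm_def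
        by (subst e1) (simp add: \<eta>'_def \<omega>'_def)
      then show "Kminus n0 n1 (\<eta>' u) (\<omega>' u) (R u) = 0" using ke2[OF u] ko2[OF u] by linarith
    qed
    have E4: "Kplus n0 n1 (\<eta>' u) (\<omega>' u) l \<ge> \<bar>Kminus n0 n1 (\<eta>' u) (\<omega>' u) l\<bar>" if "l \<ge> 1" for l
    proof (cases "l < R u")
      case True
      then show ?thesis using prU[OF u] that congP congM by auto
    next
      case False
      have "Kplus n0 n1 (\<eta>' u) (\<omega>' u) l = (int n0 + int n1) ^ (l - R u) * Kplus n0 n1 (\<eta>' u) (\<omega>' u) (R u)"
        unfolding Kplus_def by (rule Kfun_tail) (use tail False in auto)
      moreover have "Kminus n0 n1 (\<eta>' u) (\<omega>' u) l = (int n0 - int n1) ^ (l - R u) * Kminus n0 n1 (\<eta>' u) (\<omega>' u) (R u)"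
        unfolding Kminus_def by (rule Kfun_tail) (use tail False in auto)
      ultimately show ?thesis using P0 M0 by simp
    qed
    have rle: "rmax (\<eta>' u) (\<omega>' u) \<le> R u" by (rule rmax_le) (use tail in auto)
    have finS: "finite {i. \<eta>' u i \<noteq> 0}" "finite {i. \<omega>' u i \<noteq> 0}"
    proof -
      have "{i. \<eta>' u i \<noteq> 0} \<subseteq> {..R u}" "{i. \<omega>' u i \<noteq> 0} \<subseteq> {..R u}"
        using tail by (auto simp: not_less[symmetric])
      then show "finite {i. \<eta>' u i \<noteq> 0}" "finite {i. \<omega>' u i \<noteq> 0}"
        using finite_subset by blast+
    qed
    have "(\<Sum>l=1..rmax (\<eta>' u) (\<omega>' u). real (\<eta>' u l + \<omega>' u l) / real (n0 + n1) ^ l) =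
          (\<Sum>l=1..R u. real (\<eta>' u l + \<omega>' u l) / real (n0 + n1) ^ l)"
    proof (rule sum.mono_neutral_left)
      show "finite {1..R u}" by simp
      show "{1..rmax (\<eta>' u) (\<omega>' u)} \<subseteq> {1..R u}" using rle by (simp add: atLeastatMost_subset_iff)
      show "\<forall>i\<in>{1..R u} - {1..rmax (\<eta>' u) (\<omega>' u)}. real (\<eta>' u i + \<omega>' u i) / real (n0 + n1) ^ i = 0"
      proof
        fix i assume "i \<in> {1..R u} - {1..rmax (\<eta>' u) (\<omega>' u)}"
        then have "i > rmax (\<eta>' u) (\<omega>' u)" by (simp add: not_le) arith
        then have "\<eta>' u i = 0 \<and> \<omega>' u i = 0" using rmax_zero[OF finS] by blast
        then show "real (\<eta>' u i + \<omega>' u i) / real (n0 + n1) ^ i = 0" by simp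
      qed
    qed
    also have "\<dots> = (\<Sum>l=1..R u. real_of_int (int (\<eta>' u l) + int (\<omega>' u l)) / real_of_int (int n0 + int n1) ^ l)"
      by simp
    also have "\<dots> = 1"
      using Kfun_zero_iff[of "int n0 + int n1" "R u" "\<lambda>i. int (\<eta>' u i) + int (\<omega>' u i)"] P0 n0
      unfolding Kplus_def by simp
    finally show ?thesis using E4 by simp
  qed
  have "is_VLE \<Sigma> \<Sigma>1 S n0 n1 E"
    unfolding is_VLE_def using vlgE losE conE cond etaE omegaE stE by (simp add: Let_def)
  then show ?thesis using detE mlE by blast
qed


abbreviation lab :: "nat \<times> 'a list \<times> nat \<Rightarrow> 'a list" where "lab e \<equiv> fst (snd e)"
abbreviation tgt :: "nat \<times> 'a list \<times> nat \<Rightarrow> nat" where "tgt e \<equiv> snd (snd e)"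

lemma twalk_end_in: "twalk A u es v \<Longrightarrow> u \<in> X \<Longrightarrow> (\<forall>e\<in>A. tgt e \<in> X) \<Longrightarrow> v \<in> X"
  by (induction es arbitrary: u) auto

locale dirone =
  fixes \<Sigma> \<Sigma>1 :: "'a set" and S :: "'a list set" and n0 n1 r :: nat and E G :: "'a vlg"
  assumes finS: "finite \<Sigma>" and r: "r > 0" and n0pos: "n0 > 0"
    and VLE: "is_VLE \<Sigma> \<Sigma>1 S n0 n1 E" and detE: "deterministic E" and mlE: "max_edge_len_le E r"
    and vG: "is_vlg \<Sigma> G" and G1: "\<forall>i\<in>eids G. length (elab G i) = 1"
    and detG: "deterministic G" and scG: "strongly_connected G" and SG: "S = path_words G"
begin

abbreviation "AE \<equiv> tA E"
abbreviation "AG \<equiv> tA G"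

lemma vE: "is_vlg \<Sigma> E" using VLE unfolding is_VLE_def by auto

lemma AE_props: "\<forall>e\<in>AE. fst e \<in> states E \<and> tgt e \<in> states E \<and> lab e \<noteq> [] \<and> set (lab e) \<subseteq> \<Sigma>"
  using vE unfolding is_vlg_t by auto
lemma AG_props: "\<forall>e\<in>AG. fst e \<in> states G \<and> tgt e \<in> states G \<and> lab e \<noteq> [] \<and> set (lab e) \<subseteq> \<Sigma>"
  using vG unfolding is_vlg_t by auto
lemma AG1: "e \<in> AG \<Longrightarrow> length (lab e) = 1"
  using G1 ball_eids[of G "\<lambda>e. length (lab e) = 1"] unfolding elab_def by auto

lemma finE: "finite (states E)" "states E \<noteq> {}" using vE unfolding is_vlg_def by auto
lemma finG: "finite (states G)" "states G \<noteq> {}" using vG unfolding is_vlg_def by auto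

lemma dE: "distinct (edges E)" using det_distinct[OF detE] .
lemma dG: "distinct (edges G)" using det_distinct[OF detG] .
lemma tdE: "tdet AE" using det_tdet[OF dE] detE by simp
lemma tdG: "tdet AG" using det_tdet[OF dG] detG by simp
lemma lE: "labne AE" using AE_props unfolding labne_def by auto
lemma lG: "labne AG" using AG_props unfolding labne_def by auto

definition gw :: "nat \<Rightarrow> 'a list \<Rightarrow> nat \<Rightarrow> bool" where
  "gw g w g' \<longleftrightarrow> (\<exists>es. twalk AG g es g' \<and> tword es = w)"

definition FE :: "nat \<Rightarrow> 'a list set" where "FE x = {tword es | es. \<exists>v. twalk AE x es v}"
definition FG :: "nat \<Rightarrow> 'a list set" where "FG g = {w. \<exists>g'. gw g w g'}"

lemma gw_unique: "gw g w g1 \<Longrightarrow> gw g w g2 \<Longrightarrow> g1 = g2"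
  unfolding gw_def using tdet_unique[OF tdG lG] twalk_end by metis

lemma gw_Nil[simp]: "gw g [] g' \<longleftrightarrow> g = g'"
proof
  assume "gw g [] g'"
  then obtain es where "twalk AG g es g'" "tword es = []" unfolding gw_def by auto
  then show "g = g'" using lG unfolding labne_def by (cases es) auto
next
  assume "g = g'" then show "gw g [] g'" unfolding gw_def by (intro exI[of _ "[]"]) auto
qed

lemma gw_app: "gw g x g1 \<Longrightarrow> gw g1 y g2 \<Longrightarrow> gw g (x @ y) g2"
  unfolding gw_def using twalk_append by (metis tword_simps(3))

lemma tword_len_G: "twalk AG g es g' \<Longrightarrow> length (tword es) = length es"
  by (induction es arbitrary: g) (auto simp: AG1)

lemma tword_take_G: "twalk AG g es g' \<Longrightarrow> tword (take k es) = take k (tword es)"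
proof (induction es arbitrary: g k)
  case Nil then show ?case by simp
next
  case (Cons e es)
  then obtain a where a: "lab e = [a]" using AG1[of e] by (cases "lab e") auto
  show ?case
  proof (cases k)
    case 0 then show ?thesis by simp
  next
    case (Suc k') then show ?thesis using Cons a by auto
  qed
qed

lemma gw_split: "gw g (x @ y) g2 \<Longrightarrow> \<exists>g1. gw g x g1 \<and> gw g1 y g2"
proof -
  assume "gw g (x @ y) g2"
  then obtain es where es: "twalk AG g es g2" "tword es = x @ y" unfolding gw_def by auto
  let ?k = "length x"
  have "es = take ?k es @ drop ?k es" by simp
  then obtain g1 where w1: "twalk AG g (take ?k es) g1" "twalk AG g1 (drop ?k es) g2"
    using es(1) twalk_append by metis
  have "tword (take ?k es) = x" using tword_take_G[OF es(1)] es(2) by simp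
  moreover have "tword (drop ?k es) = y"
    using es(2) \<open>tword (take ?k es) = x\<close> \<open>es = take ?k es @ drop ?k es\<close>
    by (metis append_eq_append_conv tword_simps(3))
  ultimately show ?thesis using w1 unfolding gw_def by blast
qed

lemma gw_states: "gw g w g' \<Longrightarrow> g \<in> states G \<Longrightarrow> g' \<in> states G"
  unfolding gw_def using twalk_end_in AG_props by metis

lemma gw_sigma: "gw g w g' \<Longrightarrow> set w \<subseteq> \<Sigma>"
proof -
  assume "gw g w g'"
  then obtain es where "twalk AG g es g'" "tword es = w" unfolding gw_def by auto
  then show ?thesis
  proof (induction es arbitrary: g w)
    case Nil then show ?case by simp
  next
    case (Cons e es) then show ?case using AG_props by fastforce
  qed
qed

lemma gw_single: "gw g [a] g1 \<Longrightarrow> \<exists>e\<in>AG. fst e = g \<and> lab e = [a] \<and> tgt e = g1"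
proof -
  assume "gw g [a] g1"
  then obtain es where es: "twalk AG g es g1" "tword es = [a]" unfolding gw_def by auto
  then have "length es = 1" using tword_len_G by fastforce
  then obtain e where "es = [e]" by (cases es) auto
  then show ?thesis using es by auto
qed

lemma gw_edge: "e \<in> AG \<Longrightarrow> gw (fst e) (lab e) (tgt e)"
  unfolding gw_def by (intro exI[of _ "[e]"]) auto

lemma S_char: "S = {w. \<exists>g\<in>states G. w \<in> FG g}"
proof (intro set_eqI iffI)
  fix w assume "w \<in> S"
  then obtain es u v where es: "w = tword es" "twalk AG u es v" unfolding SG path_words_twalk by auto
  show "w \<in> {w. \<exists>g\<in>states G. w \<in> FG g}"
  proof (cases es)
    case Nil then show ?thesis using es finG(2) unfolding FG_def by auto
  next
    case (Cons e es')
    then have "u \<in> states G" using es AG_props by auto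
    then show ?thesis using es unfolding FG_def gw_def by auto
  qed
next
  fix w assume "w \<in> {w. \<exists>g\<in>states G. w \<in> FG g}"
  then show "w \<in> S" unfolding SG path_words_twalk FG_def gw_def by auto
qed

lemma FE_sub_S: "FE x \<subseteq> S"
proof
  fix w assume "w \<in> FE x"
  then obtain es v where "twalk AE x es v" "w = tword es" unfolding FE_def by auto
  then have "w \<in> vlg_constraint E" unfolding vlgc_twalk
    by (intro CollectI exI[of _ x] exI[of _ es] exI[of _ v] exI[of _ "[]"]) simp
  then show "w \<in> S" using VLE unfolding is_VLE_def by auto
qed

definition valid :: "nat \<Rightarrow> nat \<Rightarrow> bool" where
  "valid x g \<longleftrightarrow> x \<in> states E \<and> g \<in> states G \<and> FE x \<subseteq> FG g"

definition validT :: "nat \<Rightarrow> nat set \<Rightarrow> bool" where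
  "validT x T \<longleftrightarrow> x \<in> states E \<and> T \<subseteq> states G \<and> (\<forall>w\<in>FE x. \<exists>t\<in>T. w \<in> FG t)"

lemma FE_app: "twalk AE x es x1 \<Longrightarrow> w' \<in> FE x1 \<Longrightarrow> tword es @ w' \<in> FE x"
proof -
  assume a: "twalk AE x es x1" "w' \<in> FE x1"
  then obtain fs v where "twalk AE x1 fs v" "w' = tword fs" unfolding FE_def by auto
  then have "twalk AE x (es @ fs) v" "tword (es @ fs) = tword es @ w'"
    using a(1) twalk_append[THEN iffD2] by (blast, simp)
  then show ?thesis unfolding FE_def by (intro CollectI exI[of _ "es @ fs"]) auto
qed

lemma FG_prefix: "x @ y \<in> FG g \<Longrightarrow> x \<in> FG g"
  unfolding FG_def using gw_split by blast

lemma validT_single: "validT x T \<Longrightarrow> \<exists>x' g. valid x' g"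
proof (induction "card T" arbitrary: x T rule: less_induct)
  case less
  have fT: "finite T" using less.prems finG(1) finite_subset unfolding validT_def by blast
  have "[] \<in> FE x" unfolding FE_def by (intro CollectI exI[of _ "[]"]) auto
  then obtain t where t: "t \<in> T" using less.prems unfolding validT_def by blast
  show ?case
  proof (cases "T = {t}")
    case True
    then show ?thesis using less.prems unfolding validT_def valid_def by auto
  next
    case False
    let ?T' = "T - {t}"
    have cT': "card ?T' < card T" using fT t by (meson card_Diff1_less)
    show ?thesis
    proof (cases "validT x ?T'")
      case True then show ?thesis using less.hyps[OF cT'] by blast
    next
      case False
      then obtain w where w: "w \<in> FE x" "\<forall>t'\<in>?T'. w \<notin> FG t'"
        using less.prems unfolding validT_def by auto
      have wt: "w \<in> FG t" using w less.prems unfolding validT_def by blast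
      obtain es x1 where es: "twalk AE x es x1" "tword es = w" using w(1) unfolding FE_def by auto
      obtain t1 where t1: "gw t w t1" using wt unfolding FG_def by auto
      have "valid x1 t1" unfolding valid_def
      proof (intro conjI)
        show "x1 \<in> states E" using twalk_end_in[OF es(1)] less.prems AE_props unfolding validT_def by blast
        show "t1 \<in> states G" using gw_states[OF t1] t less.prems unfolding validT_def by blast
        show "FE x1 \<subseteq> FG t1"
        proof
          fix w' assume w': "w' \<in> FE x1"
          then have "w @ w' \<in> FE x" using FE_app es by blast
          then obtain t' where t': "t' \<in> T" "w @ w' \<in> FG t'" using less.prems unfolding validT_def by blast
          then have "w \<in> FG t'" using FG_prefix by blast
          then have "t' = t" using w(2) t'(1) by blast
          then obtain g2 where "gw t (w @ w') g2" using t' unfolding FG_def by blast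
          then obtain t1' where "gw t w t1'" "gw t1' w' g2" using gw_split by blast
          then have "t1' = t1" using gw_unique t1 by blast
          then show "w' \<in> FG t1" using \<open>gw t1' w' g2\<close> unfolding FG_def by blast
        qed
      qed
      then show ?thesis by blast
    qed
  qed
qed

lemma exists_valid: "\<exists>x g. valid x g"
proof -
  obtain x where x: "x \<in> states E" using finE by blast
  have "validT x (states G)" unfolding validT_def using x FE_sub_S S_char by blast
  then show ?thesis using validT_single by blast
qed

definition pstep :: "((nat \<times> nat) \<times> (nat \<times> nat)) set" where
  "pstep = {((x,g),(x',g')). \<exists>e\<in>AE. fst e = x \<and> tgt e = x' \<and> gw g (lab e) g'}"

lemma valid_step: "valid x g \<Longrightarrow> ((x,g),(x',g')) \<in> pstep \<Longrightarrow> valid x' g'"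
proof -
  assume v: "valid x g" and s: "((x,g),(x',g')) \<in> pstep"
  then obtain e where e: "e \<in> AE" "fst e = x" "tgt e = x'" "gw g (lab e) g'" unfolding pstep_def by auto
  show "valid x' g'" unfolding valid_def
  proof (intro conjI)
    show "x' \<in> states E" using e AE_props by auto
    show "g' \<in> states G" using gw_states[OF e(4)] v unfolding valid_def by auto
    show "FE x' \<subseteq> FG g'"
    proof
      fix w' assume "w' \<in> FE x'"
      then have "lab e @ w' \<in> FE x" using FE_app[of x "[e]" x' w'] e by auto
      then have "lab e @ w' \<in> FG g" using v unfolding valid_def by auto
      then obtain g2 where "gw g (lab e @ w') g2" unfolding FG_def by auto
      then obtain g1 where "gw g (lab e) g1" "gw g1 w' g2" using gw_split by blast
      then show "w' \<in> FG g'" using gw_unique[OF e(4)] unfolding FG_def by blast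
    qed
  qed
qed

lemma valid_rtrancl: "(p, q) \<in> pstep\<^sup>* \<Longrightarrow> valid (fst p) (snd p) \<Longrightarrow> valid (fst q) (snd q)"
proof (induction rule: rtrancl_induct)
  case base then show ?case .
next
  case (step y z) then show ?case using valid_step[of "fst y" "snd y" "fst z" "snd z"] by auto
qed

definition Rch :: "nat \<times> nat \<Rightarrow> (nat \<times> nat) set" where "Rch p = {q. (p, q) \<in> pstep\<^sup>*}"

lemma Rch_sub: "valid (fst p) (snd p) \<Longrightarrow> Rch p \<subseteq> states E \<times> states G"
proof
  fix q assume "valid (fst p) (snd p)" "q \<in> Rch p"
  then have "valid (fst q) (snd q)" using valid_rtrancl unfolding Rch_def by blast
  then show "q \<in> states E \<times> states G" unfolding valid_def by (simp add: mem_Times_iff)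
qed

lemma Rch_fin: "valid (fst p) (snd p) \<Longrightarrow> finite (Rch p)"
  using Rch_sub finE finG finite_subset by (metis finite_SigmaI)

definition q0 :: "nat \<times> nat" where
  "q0 = (SOME q. valid (fst q) (snd q) \<and> (\<forall>p\<in>Rch q. q \<in> Rch p))"

lemma q0_ex: "\<exists>q. valid (fst q) (snd q) \<and> (\<forall>p\<in>Rch q. q \<in> Rch p)"
proof -
  obtain u v where uv: "valid u v" using exists_valid by blast
  let ?X = "Rch (u,v)"
  have "(u,v) \<in> ?X" unfolding Rch_def by simp
  then obtain q where q: "q \<in> ?X" "\<forall>q'. q' \<in> ?X \<longrightarrow> card (Rch q) \<le> card (Rch q')"
    using ex_has_least_nat[of "\<lambda>q. q \<in> ?X" "(u,v)" "\<lambda>q. card (Rch q)"] by blast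
  have vq: "valid (fst q) (snd q)" using valid_rtrancl[of "(u,v)" q] q(1) uv unfolding Rch_def by auto
  have "q \<in> Rch p" if p: "p \<in> Rch q" for p
  proof -
    have sub: "Rch p \<subseteq> Rch q" using p unfolding Rch_def by auto
    have "p \<in> ?X" using p q(1) unfolding Rch_def by auto
    then have c1: "card (Rch q) \<le> card (Rch p)" using q(2) by (metis surj_pair)
    have c2: "card (Rch p) \<le> card (Rch q)" by (rule card_mono[OF Rch_fin[OF vq] sub])
    have "card (Rch p) = card (Rch q)" using c1 c2 by linarith
    then have "Rch p = Rch q" using card_subset_eq[OF Rch_fin[OF vq] sub] by blast
    then show ?thesis unfolding Rch_def by auto
  qed
  then show ?thesis using vq by blast
qed

lemma q0: "valid (fst q0) (snd q0)" "\<And>p. p \<in> Rch q0 \<Longrightarrow> q0 \<in> Rch p"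
  using someI_ex[OF q0_ex] unfolding q0_def[symmetric] by auto

definition Q :: "(nat \<times> nat) set" where "Q = Rch q0"

lemma q0Q: "q0 \<in> Q" unfolding Q_def Rch_def by simp
lemma Q_valid: "p \<in> Q \<Longrightarrow> valid (fst p) (snd p)"
  unfolding Q_def Rch_def using valid_rtrancl q0(1) by auto
lemma Q_closed: "p \<in> Q \<Longrightarrow> (p, p') \<in> pstep \<Longrightarrow> p' \<in> Q"
  unfolding Q_def Rch_def by auto
lemma Q_fin: "finite Q" unfolding Q_def using Rch_fin q0(1) .
lemma Q_back: "p \<in> Q \<Longrightarrow> (p, q0) \<in> pstep\<^sup>*" using q0(2) unfolding Q_def Rch_def by auto

end


lemma strict_prefix_butlast: "prefix xs ys \<Longrightarrow> xs \<noteq> ys \<Longrightarrow> prefix xs (butlast ys)"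
proof -
  assume "prefix xs ys" "xs \<noteq> ys"
  then obtain zs where "ys = xs @ zs" "zs \<noteq> []" by (auto simp: prefix_def)
  then show ?thesis by (simp add: butlast_append)
qed

lemma prefix_eqlen: "prefix xs ys \<Longrightarrow> length xs = length ys \<Longrightarrow> xs = ys"
  by (auto simp: prefix_def)

context dirone
begin

definition cq :: "nat \<times> nat \<Rightarrow> nat" where "cq p = 2 * prod_encode p"
definition cg :: "nat \<Rightarrow> nat" where "cg g = 2 * g + 1"
definition gam :: "nat \<Rightarrow> nat" where "gam s = (if even s then snd (prod_decode (s div 2)) else s div 2)"
definition v0 :: nat where "v0 = snd q0"
definition tg :: "nat \<Rightarrow> nat" where "tg g = (if g = v0 then cq q0 else cg g)"

lemma cq_inj[simp]: "cq p = cq p' \<longleftrightarrow> p = p'"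
  unfolding cq_def by (simp add: prod_encode_eq)
lemma cg_inj[simp]: "cg g = cg g' \<longleftrightarrow> g = g'"
  unfolding cg_def by simp
lemma cq_cg[simp]: "cq p \<noteq> cg g" "cg g \<noteq> cq p"
  unfolding cq_def cg_def by presburger+
lemma gam_cq[simp]: "gam (cq p) = snd p"
  unfolding gam_def cq_def by simp
lemma gam_cg[simp]: "gam (cg g) = g"
  unfolding gam_def cg_def by simp
lemma gam_tg[simp]: "gam (tg g) = g"
  unfolding tg_def v0_def by auto

definition esc :: "nat \<Rightarrow> 'a list \<Rightarrow> bool" where
  "esc x w \<longleftrightarrow> w \<noteq> [] \<and> (\<forall>e\<in>AE. fst e = x \<longrightarrow> \<not> prefix w (lab e) \<and> \<not> prefix (lab e) w) \<and>
     (butlast w = [] \<or> (\<exists>e\<in>AE. fst e = x \<and> prefix (butlast w) (lab e)))"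

definition AEd :: "(nat \<times> 'a list \<times> nat) set" where
  "AEd = {(cq (x,g), lab e, cq (tgt e, g')) | x g e g'. (x,g) \<in> Q \<and> e \<in> AE \<and> fst e = x \<and> gw g (lab e) g'}"
definition AEs :: "(nat \<times> 'a list \<times> nat) set" where
  "AEs = {(cq (x,g), w, cg g') | x g w g'. (x,g) \<in> Q \<and> esc x w \<and> gw g w g'}"
definition AGe :: "(nat \<times> 'a list \<times> nat) set" where
  "AGe = {(cg (fst e), lab e, tg (tgt e)) | e. e \<in> AG}"
definition Af :: "(nat \<times> 'a list \<times> nat) set" where "Af = AEd \<union> AEs \<union> AGe"
definition Sf :: "nat set" where "Sf = cq ` Q \<union> cg ` states G"

lemma Q_G: "(x,g) \<in> Q \<Longrightarrow> g \<in> states G" "(x,g) \<in> Q \<Longrightarrow> x \<in> states E" "(x,g) \<in> Q \<Longrightarrow> FE x \<subseteq> FG g"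
  using Q_valid[of "(x,g)"] unfolding valid_def by auto

lemma FE_edge: "e \<in> AE \<Longrightarrow> lab e \<in> FE (fst e)"
  unfolding FE_def by (intro CollectI exI[of _ "[e]"]) auto

lemma edge_gw: "(x,g) \<in> Q \<Longrightarrow> e \<in> AE \<Longrightarrow> fst e = x \<Longrightarrow> \<exists>g'. gw g (lab e) g'"
  using Q_G(3) FE_edge unfolding FG_def by blast

lemma AEd_Q: "(x,g) \<in> Q \<Longrightarrow> e \<in> AE \<Longrightarrow> fst e = x \<Longrightarrow> gw g (lab e) g' \<Longrightarrow> (tgt e, g') \<in> Q"
  using Q_closed[of "(x,g)" "(tgt e, g')"] unfolding pstep_def by blast

lemma esc_len: "esc x w \<Longrightarrow> length w \<le> r"
proof -
  assume a: "esc x w"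
  show ?thesis
  proof (cases "butlast w = []")
    case True
    then have "length w = 1" using a unfolding esc_def by (cases w rule: rev_cases) auto
    then show ?thesis using r by simp
  next
    case False
    then obtain e where e: "e \<in> AE" "fst e = x" "prefix (butlast w) (lab e)" using a unfolding esc_def by auto
    have np: "\<not> prefix (lab e) w" using a e unfolding esc_def by auto
    have "length (butlast w) \<noteq> length (lab e)"
    proof
      assume "length (butlast w) = length (lab e)"
      then have "butlast w = lab e" using e(3) prefix_eqlen by blast
      then show False using np prefixeq_butlast by metis
    qed
    then have "length (butlast w) < length (lab e)" using prefix_length_le[OF e(3)] by linarith
    moreover have "length (lab e) \<le> r" using mlE e(1) unfolding maxlen_t by auto
    ultimately show ?thesis by simp
  qed
qed

lemma Af_fin: "finite Af"
proof -
  have "AEd \<subseteq> (\<lambda>((x,g),e,g'). (cq (x,g), lab e, cq (tgt e, g'))) ` (Q \<times> AE \<times> states G)"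
  proof
    fix t assume "t \<in> AEd"
    then obtain x g e g' where t: "t = (cq (x,g), lab e, cq (tgt e, g'))" "(x,g) \<in> Q" "e \<in> AE" "gw g (lab e) g'"
      unfolding AEd_def by blast
    then have "g' \<in> states G" using gw_states Q_G by blast
    then show "t \<in> (\<lambda>((x,g),e,g'). (cq (x,g), lab e, cq (tgt e, g'))) ` (Q \<times> AE \<times> states G)"
      using t by (intro image_eqI[of _ _ "((x,g),e,g')"]) auto
  qed
  moreover have "AEs \<subseteq> (\<lambda>((x,g),w,g'). (cq (x,g), w, cg g')) ` (Q \<times> {w. set w \<subseteq> \<Sigma> \<and> length w \<le> r} \<times> states G)"
  proof
    fix t assume "t \<in> AEs"
    then obtain x g w g' where t: "t = (cq (x,g), w, cg g')" "(x,g) \<in> Q" "esc x w" "gw g w g'"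
      unfolding AEs_def by blast
    then have "g' \<in> states G" "set w \<subseteq> \<Sigma>" "length w \<le> r" using gw_states Q_G gw_sigma esc_len by blast+
    then show "t \<in> (\<lambda>((x,g),w,g'). (cq (x,g), w, cg g')) ` (Q \<times> {w. set w \<subseteq> \<Sigma> \<and> length w \<le> r} \<times> states G)"
      using t by (intro image_eqI[of _ _ "((x,g),w,g')"]) auto
  qed
  moreover have "AGe = (\<lambda>e. (cg (fst e), lab e, tg (tgt e))) ` AG" unfolding AGe_def by blast
  moreover have "finite AE" "finite AG" unfolding tA_def by auto
  moreover have "finite {w. set w \<subseteq> \<Sigma> \<and> length w \<le> r}" using finite_lists_length_le[OF finS] .
  ultimately show ?thesis unfolding Af_def using Q_fin finG(1)
    by (metis (no_types, lifting) finite_Un finite_SigmaI finite_imageI finite_subset)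
qed

lemma tg_Sf: "g \<in> states G \<Longrightarrow> tg g \<in> Sf"
  unfolding tg_def Sf_def using q0Q by auto

lemma Af_cases:
  assumes "t \<in> Af"
  obtains (Ed) x g e g' where "t = (cq (x,g), lab e, cq (tgt e, g'))" "(x,g) \<in> Q" "e \<in> AE" "fst e = x" "gw g (lab e) g'"
    | (Es) x g w g' where "t = (cq (x,g), w, cg g')" "(x,g) \<in> Q" "esc x w" "gw g w g'"
    | (Ge) e where "t = (cg (fst e), lab e, tg (tgt e))" "e \<in> AG"
  using assms unfolding Af_def AEd_def AEs_def AGe_def by blast

lemma Af_props: assumes "t \<in> Af" shows "fst t \<in> Sf \<and> tgt t \<in> Sf \<and> gw (gam (fst t)) (lab t) (gam (tgt t)) \<and>
   lab t \<noteq> [] \<and> set (lab t) \<subseteq> \<Sigma> \<and> length (lab t) \<le> r"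
  using assms
proof (cases rule: Af_cases)
  case (Ed x g e g')
  have q: "(tgt e, g') \<in> Q" using AEd_Q[OF Ed(2-5)] .
  have s1: "fst t \<in> Sf" "tgt t \<in> Sf" unfolding Sf_def using Ed(1,2) q by auto
  have s2: "gw (gam (fst t)) (lab t) (gam (tgt t))" using Ed(1,5) by simp
  have s3: "lab e \<noteq> [] \<and> set (lab e) \<subseteq> \<Sigma>" using AE_props Ed(3) by blast
  have s4: "length (lab e) \<le> r" using mlE Ed(3) unfolding maxlen_t by blast
  show ?thesis using s1 s2 s3 s4 Ed(1) by simp
next
  case (Es x g w g')
  have g: "g \<in> states G" using Q_G(1)[OF Es(2)] .
  have s1: "fst t \<in> Sf" "tgt t \<in> Sf" unfolding Sf_def using Es(1,2) gw_states[OF Es(4) g] by auto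
  have s2: "gw (gam (fst t)) (lab t) (gam (tgt t))" using Es(1,4) by simp
  have s3: "w \<noteq> [] \<and> set w \<subseteq> \<Sigma>" using Es(3,4) gw_sigma unfolding esc_def by blast
  have s4: "length w \<le> r" using esc_len Es(3) by blast
  show ?thesis using s1 s2 s3 s4 Es(1) by simp
next
  case (Ge e)
  have g: "fst e \<in> states G" "tgt e \<in> states G" using AG_props Ge(2) by blast+
  have s1: "fst t \<in> Sf" "tgt t \<in> Sf" unfolding Sf_def using Ge(1) g tg_Sf[of "tgt e"] unfolding Sf_def by auto
  have s2: "gw (gam (fst t)) (lab t) (gam (tgt t))" using Ge(1) gw_edge[OF Ge(2)] by simp
  have s3: "lab e \<noteq> [] \<and> set (lab e) \<subseteq> \<Sigma>" using AG_props Ge(2) by blast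
  have s4: "length (lab e) \<le> r" using AG1[OF Ge(2)] r by simp
  show ?thesis using s1 s2 s3 s4 Ge(1) by simp
qed

lemma tdet_Af: "tdet Af"
  unfolding tdet_def
proof (intro ballI impI notI)
  fix t1 t2 assume t1: "t1 \<in> Af" and t2: "t2 \<in> Af" and ne: "t1 \<noteq> t2 \<and> fst t1 = fst t2"
    and pf: "prefix (lab t1) (lab t2)"
  show False
    using t1
  proof (cases rule: Af_cases)
    case (Ed x g a g1)
    show False using t2
    proof (cases rule: Af_cases)
      case (Ed x' g' b g2)
      then have xg: "x' = x" "g' = g" using ne \<open>t1 = _\<close> by auto
      have "a = b" using tdE pf ne Ed xg \<open>t1 = _\<close> \<open>a \<in> AE\<close> \<open>fst a = x\<close> unfolding tdet_def by fastforce
      then have "g1 = g2" using gw_unique \<open>gw g (lab a) g1\<close> Ed xg by blast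
      then show False using ne Ed \<open>t1 = _\<close> xg \<open>a = b\<close> by auto
    next
      case (Es x' g' w g2)
      then show False using ne pf \<open>t1 = _\<close> \<open>a \<in> AE\<close> \<open>fst a = x\<close> unfolding esc_def by auto
    next
      case (Ge e)
      then show False using ne \<open>t1 = _\<close> by auto
    qed
  next
    case (Es x g w g1)
    show False using t2
    proof (cases rule: Af_cases)
      case (Ed x' g' b g2)
      then show False using ne pf \<open>t1 = _\<close> \<open>esc x w\<close> unfolding esc_def by auto
    next
      case (Es x' g' w' g2)
      then have xg: "x' = x" "g' = g" using ne \<open>t1 = _\<close> by auto
      show False
      proof (cases "w = w'")
        case True
        then have "g1 = g2" using gw_unique \<open>gw g w g1\<close> Es xg by blast
        then show False using ne Es \<open>t1 = _\<close> xg True by auto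
      next
        case False
        have p: "prefix w (butlast w')" using strict_prefix_butlast pf \<open>t1 = _\<close> Es False by auto
        show False using \<open>esc x' w'\<close> \<open>esc x w\<close> p xg unfolding esc_def
          by (metis prefix_Nil prefix_order.trans)
      qed
    next
      case (Ge e)
      then show False using ne \<open>t1 = _\<close> by auto
    qed
  next
    case (Ge a)
    show False using t2
    proof (cases rule: Af_cases)
      case (Ed x' g' b g2)
      then show False using ne \<open>t1 = _\<close> by auto
    next
      case (Es x' g' w g2)
      then show False using ne \<open>t1 = _\<close> by auto
    next
      case (Ge b)
      have "fst a = fst b" using ne Ge \<open>t1 = _\<close> by auto
      have "lab a = lab b" using pf Ge \<open>t1 = _\<close> AG1 \<open>a \<in> AG\<close>
        by (metis prefix_eqlen fst_conv snd_conv)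
      then have "a = b" using tdG \<open>fst a = fst b\<close> \<open>a \<in> AG\<close> Ge unfolding tdet_def by fastforce
      then show False using ne Ge \<open>t1 = _\<close> by auto
    qed
  qed
qed

lemma walk_gw: "twalk Af s es s' \<Longrightarrow> gw (gam s) (tword es) (gam s')"
proof (induction es arbitrary: s)
  case Nil then show ?case by simp
next
  case (Cons t es)
  then show ?case using Af_props[of t] gw_app by fastforce
qed

lemma walk_Sf: "twalk Af s es s' \<Longrightarrow> s \<in> Sf \<Longrightarrow> s' \<in> Sf"
  using twalk_end_in Af_props by metis

end


context dirone
begin

lemma Rch_Q: "p \<in> Q \<Longrightarrow> (p, q) \<in> pstep\<^sup>* \<Longrightarrow> q \<in> Q"
  unfolding Q_def Rch_def by auto

lemma pstep_edge: "y \<in> Q \<Longrightarrow> (y, z) \<in> pstep \<Longrightarrow> \<exists>t\<in>Af. fst t = cq y \<and> tgt t = cq z"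
proof -
  assume y: "y \<in> Q" and s: "(y, z) \<in> pstep"
  obtain x g x' g' where yz: "y = (x,g)" "z = (x',g')" by (cases y, cases z) auto
  obtain e where e: "e \<in> AE" "fst e = x" "tgt e = x'" "gw g (lab e) g'" using s yz unfolding pstep_def by auto
  have "(cq (x,g), lab e, cq (tgt e, g')) \<in> AEd" unfolding AEd_def using y yz e by blast
  then show ?thesis unfolding Af_def using yz e by (intro bexI[of _ "(cq (x,g), lab e, cq (tgt e, g'))"]) auto
qed

lemma Q_walk: "(p, p') \<in> pstep\<^sup>* \<Longrightarrow> p \<in> Q \<Longrightarrow> \<exists>es. twalk Af (cq p) es (cq p')"
proof (induction rule: rtrancl_induct)
  case base then show ?case by (intro exI[of _ "[]"]) simp
next
  case (step y z)
  obtain es where es: "twalk Af (cq p) es (cq y)" using step by blast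
  have "y \<in> Q" using Rch_Q step by blast
  then obtain t where t: "t \<in> Af" "fst t = cq y" "tgt t = cq z" using pstep_edge step.hyps(2) by blast
  have "twalk Af (cq y) [t] (cq z)" using t by simp
  then have "twalk Af (cq p) (es @ [t]) (cq z)" using es twalk_append[THEN iffD2] by blast
  then show ?case by blast
qed

lemma x0_edge: "\<exists>e\<in>AE. fst e = fst q0"
proof (rule ccontr)
  assume no: "\<not> ?thesis"
  have x0: "fst q0 \<in> states E" using q0(1) unfolding valid_def by auto
  have z1: "eta_dist \<Sigma>1 E (states E) (fst q0) = (\<lambda>_. 0)" and z2: "omega_dist \<Sigma>1 E (states E) (fst q0) = (\<lambda>_. 0)"
  proof -
    have "{e \<in> AE. fst e = fst q0 \<and> tgt e \<in> states E \<and> length (lab e) = l \<and> even_word \<Sigma>1 (lab e)} = {}"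
      "{e \<in> AE. fst e = fst q0 \<and> tgt e \<in> states E \<and> length (lab e) = l \<and> \<not> even_word \<Sigma>1 (lab e)} = {}" for l
      using no by auto
    then show "eta_dist \<Sigma>1 E (states E) (fst q0) = (\<lambda>_. 0)" "omega_dist \<Sigma>1 E (states E) (fst q0) = (\<lambda>_. 0)"
      unfolding eta_dist_t[OF dE] omega_dist_t[OF dE] by (simp_all only: card.empty)
  qed
  have "rmax (\<lambda>_::nat. 0::nat) (\<lambda>_. 0) = 0" unfolding rmax_def by simp
  then show False using VLE x0 z1 z2 unfolding is_VLE_def Let_def by auto
qed

lemma v0G: "v0 \<in> states G" using q0(1) unfolding valid_def v0_def by auto

lemma v0_out: "\<exists>e\<in>AG. fst e = v0"
proof -
  obtain e where e: "e \<in> AE" "fst e = fst q0" using x0_edge by blast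
  have "lab e \<in> FG v0" using FE_edge[OF e(1)] e(2) q0(1) unfolding valid_def v0_def by auto
  then obtain g' es where es: "twalk AG v0 es g'" "tword es = lab e" unfolding FG_def gw_def by auto
  have "es \<noteq> []" using es AE_props e(1) by auto
  then show ?thesis using es by (cases es) auto
qed

lemma G_to_v0: "g \<in> states G \<Longrightarrow> \<exists>es. es \<noteq> [] \<and> twalk AG g es v0"
proof -
  assume g: "g \<in> states G"
  show ?thesis
  proof (cases "g = v0")
    case False
    obtain es where "twalk AG g es v0" using scG g v0G unfolding sc_twalk by blast
    then show ?thesis using False by (intro exI[of _ es]) (cases es, auto)
  next
    case True
    obtain e where e: "e \<in> AG" "fst e = v0" using v0_out by blast
    obtain fs where "twalk AG (tgt e) fs v0" using scG AG_props e(1) v0G unfolding sc_twalk by blast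
    then show ?thesis using e True by (intro exI[of _ "e # fs"]) auto
  qed
qed

lemma G_walk_in: "twalk AG g es v0 \<Longrightarrow> es \<noteq> [] \<Longrightarrow> \<exists>es'. twalk Af (cg g) es' (cq q0)"
proof (induction es arbitrary: g)
  case Nil then show ?case by simp
next
  case (Cons e es1)
  have e: "e \<in> AG" "fst e = g" "twalk AG (tgt e) es1 v0" using Cons.prems by auto
  let ?t = "(cg g, lab e, tg (tgt e))"
  have t: "?t \<in> Af" unfolding Af_def AGe_def using e by blast
  show ?case
  proof (cases "tgt e = v0")
    case True
    then have "twalk Af (cg g) [?t] (cq q0)" using t unfolding tg_def by simp
    then show ?thesis by blast
  next
    case False
    then have "es1 \<noteq> []" using e(3) by auto
    then obtain es' where "twalk Af (cg (tgt e)) es' (cq q0)" using Cons.IH e(3) by blast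
    then have "twalk Af (cg g) (?t # es') (cq q0)" using t False unfolding tg_def by simp
    then show ?thesis by blast
  qed
qed

lemma back_walk: "s \<in> Sf \<Longrightarrow> \<exists>es. twalk Af s es (cq q0)"
proof -
  assume "s \<in> Sf"
  then consider (Q) p where "s = cq p" "p \<in> Q" | (G) g where "s = cg g" "g \<in> states G"
    unfolding Sf_def by auto
  then show ?thesis
  proof cases
    case Q then show ?thesis using Q_walk Q_back by blast
  next
    case G then show ?thesis using G_to_v0 G_walk_in by blast
  qed
qed

lemma cover: "s \<in> Sf \<Longrightarrow> gw (gam s) w g' \<Longrightarrow> \<exists>es s'. twalk Af s es s' \<and> prefix w (tword es)"
proof (induction "length w" arbitrary: s w g' rule: less_induct)
  case less
  show ?case
  proof (cases w)
    case Nil then show ?thesis by (intro exI[of _ "[]"] exI[of _ s]) simp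
  next
    case (Cons a w1)
    from less.prems(1) consider (G) g where "s = cg g" "g \<in> states G" | (Q) x g where "s = cq (x,g)" "(x,g) \<in> Q"
      unfolding Sf_def by auto
    then show ?thesis
    proof cases
      case G
      have gs: "gam s = g" using G by simp
      obtain g1 where g1: "gw g [a] g1" "gw g1 w1 g'" using gw_split[of g "[a]" w1 g'] less.prems(2) Cons gs by auto
      obtain e where e: "e \<in> AG" "fst e = g" "lab e = [a]" "tgt e = g1" using gw_single[OF g1(1)] by blast
      let ?t = "(cg g, [a], tg g1)"
      have ed0: "(cg (fst e), lab e, tg (tgt e)) \<in> Af" unfolding Af_def AGe_def using e(1) by blast
      have ed: "?t \<in> Af" using ed0 e(2-4) by simp
      have g1G: "g1 \<in> states G" using gw_states[OF g1(1) G(2)] .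
      have "tg g1 \<in> Sf" using tg_Sf[OF g1G] .
      moreover have "gw (gam (tg g1)) w1 g'" using g1(2) by simp
      moreover have "length w1 < length w" using Cons by simp
      ultimately obtain es s' where es: "twalk Af (tg g1) es s'" "prefix w1 (tword es)"
        using less.hyps by blast
      have "twalk Af s (?t # es) s'" using es ed G by simp
      moreover have "prefix w (tword (?t # es))" using es(2) Cons by simp
      ultimately show ?thesis by blast
    next
      case Q
      have gs: "gam s = g" using Q by simp
      have wg: "gw g w g'" using less.prems(2) gs by simp
      have gG: "g \<in> states G" using Q_G(1)[OF Q(2)] .
      show ?thesis
      proof (cases "\<exists>e\<in>AE. fst e = x \<and> prefix (lab e) w")
        case True
        then obtain e where e: "e \<in> AE" "fst e = x" "prefix (lab e) w" by blast
        then obtain w2 where w2: "w = lab e @ w2" by (auto simp: prefix_def)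
        obtain g1 where g1: "gw g (lab e) g1" "gw g1 w2 g'" using gw_split wg w2 by blast
        let ?t = "(cq (x,g), lab e, cq (tgt e, g1))"
        have ed: "?t \<in> Af" unfolding Af_def AEd_def using e g1 Q by blast
        have q1: "(tgt e, g1) \<in> Q" using AEd_Q[OF Q(2) e(1,2) g1(1)] .
        have "cq (tgt e, g1) \<in> Sf" using q1 unfolding Sf_def by auto
        moreover have "gw (gam (cq (tgt e, g1))) w2 g'" using g1(2) by simp
        moreover have "length w2 < length w" using w2 AE_props e(1) by auto
        ultimately obtain es s' where es: "twalk Af (cq (tgt e, g1)) es s'" "prefix w2 (tword es)"
          using less.hyps by blast
        have "twalk Af s (?t # es) s'" using es ed Q by simp
        moreover have "prefix w (tword (?t # es))" using es(2) w2 by simp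
        ultimately show ?thesis by blast
      next
        case notA: False
        show ?thesis
        proof (cases "\<exists>e\<in>AE. fst e = x \<and> prefix w (lab e)")
          case True
          then obtain e where e: "e \<in> AE" "fst e = x" "prefix w (lab e)" by blast
          obtain g1 where g1: "gw g (lab e) g1" using edge_gw[OF Q(2) e(1,2)] by blast
          let ?t = "(cq (x,g), lab e, cq (tgt e, g1))"
          have ed: "?t \<in> Af" unfolding Af_def AEd_def using e g1 Q by blast
          have "twalk Af s [?t] (cq (tgt e, g1))" using ed Q by simp
          moreover have "prefix w (tword [?t])" using e(3) by simp
          ultimately show ?thesis by blast
        next
          case notB: False
          define k where "k = (LEAST k. 1 \<le> k \<and> \<not> (\<exists>e\<in>AE. fst e = x \<and> prefix (take k w) (lab e)))"
          have exk: "1 \<le> length w \<and> \<not> (\<exists>e\<in>AE. fst e = x \<and> prefix (take (length w) w) (lab e))"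
            using notB Cons by simp
          have k1: "1 \<le> k" and kn: "\<not> (\<exists>e\<in>AE. fst e = x \<and> prefix (take k w) (lab e))"
            using LeastI[of "\<lambda>k. 1 \<le> k \<and> \<not> (\<exists>e\<in>AE. fst e = x \<and> prefix (take k w) (lab e))", OF exk]
            unfolding k_def by auto
          have kle: "k \<le> length w" using Least_le[of "\<lambda>k. 1 \<le> k \<and> \<not> (\<exists>e\<in>AE. fst e = x \<and> prefix (take k w) (lab e))", OF exk]
            unfolding k_def by simp
          define ew where "ew = take k w"
          define w2 where "w2 = drop k w"
          have wsplit: "w = ew @ w2" unfolding ew_def w2_def by simp
          have "esc x ew" unfolding esc_def
          proof (intro conjI ballI impI)
            show "ew \<noteq> []" unfolding ew_def using k1 Cons by simp
          next
            fix e assume "e \<in> AE" "fst e = x"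
            then show "\<not> prefix ew (lab e)" using kn unfolding ew_def by blast
          next
            fix e assume e: "e \<in> AE" "fst e = x"
            show "\<not> prefix (lab e) ew"
            proof
              assume "prefix (lab e) ew"
              then have "prefix (lab e) w" unfolding ew_def using take_is_prefix prefix_order.trans by metis
              then show False using notA e by blast
            qed
          next
            show "butlast ew = [] \<or> (\<exists>e\<in>AE. fst e = x \<and> prefix (butlast ew) (lab e))"
            proof (cases "k - 1 = 0")
              case True
              then have "k = 1" using k1 by simp
              then show ?thesis unfolding ew_def using Cons by simp
            next
              case False
              have "butlast ew = take (k - 1) w" unfolding ew_def using kle by (simp add: butlast_take)
              moreover have "\<not> \<not> (\<exists>e\<in>AE. fst e = x \<and> prefix (take (k - 1) w) (lab e))"
              proof
                assume "\<not> (\<exists>e\<in>AE. fst e = x \<and> prefix (take (k - 1) w) (lab e))"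
                then have "k \<le> k - 1" using False unfolding k_def by (intro Least_le) simp
                then show False using k1 by simp
              qed
              ultimately show ?thesis by simp
            qed
          qed
          obtain g1 where g1: "gw g ew g1" "gw g1 w2 g'" using gw_split wg wsplit by blast
          let ?t = "(cq (x,g), ew, cg g1)"
          have ed: "?t \<in> Af" unfolding Af_def AEs_def using \<open>esc x ew\<close> g1 Q by blast
          have g1G: "g1 \<in> states G" using gw_states[OF g1(1) gG] .
          have "cg g1 \<in> Sf" using g1G unfolding Sf_def by auto
          moreover have "gw (gam (cg g1)) w2 g'" using g1(2) by simp
          moreover have "length w2 < length w" unfolding w2_def using k1 kle by simp
          ultimately obtain es s' where es: "twalk Af (cg g1) es s'" "prefix w2 (tword es)"
            using less.hyps by blast
          have "twalk Af s (?t # es) s'" using es ed Q by simp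
          moreover have "prefix w (tword (?t # es))" using es(2) wsplit by simp
          ultimately show ?thesis by blast
        qed
      qed
    qed
  qed
qed

end


context dirone
begin

definition RH :: "nat set" where "RH = {s. \<exists>es. twalk Af (cq q0) es s}"
definition EH :: "(nat \<times> 'a list \<times> nat) set" where "EH = {t \<in> Af. fst t \<in> RH}"
definition Hc :: "'a vlg" where "Hc = (RH, SOME xs. set xs = EH \<and> distinct xs)"

lemma finEH: "finite EH" unfolding EH_def using Af_fin by simp

lemma Hc_props: "states Hc = RH" "tA Hc = EH" "distinct (edges Hc)"
proof -
  have ex: "\<exists>xs. set xs = EH \<and> distinct xs" using finite_distinct_list[OF finEH] by blast
  show "states Hc = RH" unfolding Hc_def states_def by simp
  show "tA Hc = EH" "distinct (edges Hc)" unfolding Hc_def tA_def edges_def using someI_ex[OF ex] by auto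
qed

lemma q0RH: "cq q0 \<in> RH" unfolding RH_def by (intro CollectI exI[of _ "[]"]) simp

lemma Sf_fin: "finite Sf" unfolding Sf_def using Q_fin finG(1) by simp

lemma q0Sf: "cq q0 \<in> Sf" unfolding Sf_def using q0Q by auto

lemma RH_Sf: "RH \<subseteq> Sf" unfolding RH_def using walk_Sf q0Sf by blast

lemma RH_closed: "t \<in> Af \<Longrightarrow> fst t \<in> RH \<Longrightarrow> tgt t \<in> RH"
proof -
  assume t: "t \<in> Af" "fst t \<in> RH"
  then obtain es where es: "twalk Af (cq q0) es (fst t)" unfolding RH_def by auto
  have "twalk Af (fst t) [t] (tgt t)" using t by simp
  then have "twalk Af (cq q0) (es @ [t]) (tgt t)" using es twalk_append[THEN iffD2] by blast
  then show ?thesis unfolding RH_def by blast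
qed

lemma walkH: "s \<in> RH \<Longrightarrow> twalk Af s es s' \<Longrightarrow> twalk EH s es s'"
proof (induction es arbitrary: s)
  case Nil then show ?case by simp
next
  case (Cons t es)
  then have "t \<in> EH" unfolding EH_def by auto
  moreover have "tgt t \<in> RH" using RH_closed Cons.prems by auto
  ultimately show ?case using Cons by auto
qed

lemma walkH_Af: "twalk EH s es s' \<Longrightarrow> twalk Af s es s'"
  using twalk_mono EH_def by (metis (no_types, lifting) mem_Collect_eq subsetI)

lemma S_gw: "w \<in> S \<longleftrightarrow> (\<exists>g g'. gw g w g')"
  unfolding SG path_words_twalk gw_def by blast

lemma Hc_vlg: "is_vlg \<Sigma> Hc"
  unfolding is_vlg_t Hc_props
proof (intro conjI ballI)
  show "finite RH" using RH_Sf Sf_fin finite_subset by blast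
  show "RH \<noteq> {}" using q0RH by blast
  fix e assume e: "e \<in> EH"
  then show "fst e \<in> RH" unfolding EH_def by auto
  show "tgt e \<in> RH" using e RH_closed unfolding EH_def by auto
  show "lab e \<noteq> []" "set (lab e) \<subseteq> \<Sigma>" using e Af_props unfolding EH_def by auto
qed

lemma Hc_det: "deterministic Hc"
  using det_tdet[OF Hc_props(3)] Hc_props(2) tdet_mono[OF tdet_Af] EH_def by auto

lemma Hc_ml: "max_edge_len_le Hc r"
  unfolding maxlen_t Hc_props EH_def using Af_props by auto

lemma Hc_sc: "strongly_connected Hc"
  unfolding sc_twalk Hc_props
proof (intro ballI)
  fix u v assume u: "u \<in> RH" and v: "v \<in> RH"
  obtain es1 where es1: "twalk Af u es1 (cq q0)" using back_walk RH_Sf u by blast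
  obtain es2 where es2: "twalk Af (cq q0) es2 v" using v unfolding RH_def by blast
  have "twalk Af u (es1 @ es2) v" using es1 es2 twalk_append[THEN iffD2] by blast
  then show "\<exists>es. twalk EH u es v" using walkH u by blast
qed

lemma Hc_con: "vlg_constraint Hc = S"
proof (intro set_eqI iffI)
  fix w assume "w \<in> vlg_constraint Hc"
  then obtain u es v x y where es: "twalk EH u es v" "x @ w @ y = tword es"
    unfolding vlgc_twalk Hc_props by blast
  have "gw (gam u) (x @ w @ y) (gam v)" using walk_gw[OF walkH_Af[OF es(1)]] es(2) by simp
  then obtain g1 where "gw g1 (w @ y) (gam v)" using gw_split by blast
  then obtain g2 where "gw g1 w g2" using gw_split by blast
  then show "w \<in> S" unfolding S_gw by blast
next
  fix w assume "w \<in> S"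
  then obtain g where g: "g \<in> states G" "w \<in> FG g" unfolding S_char by blast
  then obtain g' where g': "gw g w g'" unfolding FG_def by blast
  obtain zs where zs: "twalk AG v0 zs g" using scG g(1) v0G unfolding sc_twalk by blast
  have "gw v0 (tword zs) g" unfolding gw_def using zs by blast
  then have "gw (gam (cq q0)) (tword zs @ w) g'" using gw_app g' unfolding v0_def by simp
  then obtain es s' where es: "twalk Af (cq q0) es s'" "prefix (tword zs @ w) (tword es)"
    using cover q0Sf by blast
  have "twalk EH (cq q0) es s'" using walkH q0RH es(1) by blast
  moreover obtain y where "tword es = tword zs @ w @ y" using es(2) by (auto simp: prefix_def)
  ultimately show "w \<in> vlg_constraint Hc" unfolding vlgc_twalk Hc_props
    by (intro CollectI exI[of _ "cq q0"] exI[of _ es] exI[of _ s'] exI[of _ "tword zs"] exI[of _ y]) simp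
qed

lemma QRH: "cq ` Q \<subseteq> RH"
proof
  fix s assume "s \<in> cq ` Q"
  then obtain p where p: "s = cq p" "p \<in> Q" by blast
  then have "(q0, p) \<in> pstep\<^sup>*" unfolding Q_def Rch_def by simp
  then obtain es where "twalk Af (cq q0) es (cq p)" using Q_walk q0Q by blast
  then show "s \<in> RH" unfolding RH_def using p by blast
qed

definition gd :: "nat \<Rightarrow> 'a list \<Rightarrow> nat" where "gd g w = (THE g'. gw g w g')"

lemma gd: "gw g w g' \<Longrightarrow> gd g w = g'"
  unfolding gd_def using gw_unique by blast

lemma card_match:
  assumes xg: "(x,g) \<in> Q"
  shows "card {t \<in> EH. fst t = cq (x,g) \<and> tgt t \<in> cq ` Q \<and> \<Phi> (lab t)} =
         card {e \<in> AE. fst e = x \<and> tgt e \<in> states E \<and> \<Phi> (lab e)}"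
proof -
  define f where "f e = (cq (x,g), lab e, cq (tgt e, gd g (lab e)))" for e
  let ?L = "{t \<in> EH. fst t = cq (x,g) \<and> tgt t \<in> cq ` Q \<and> \<Phi> (lab t)}"
  let ?R = "{e \<in> AE. fst e = x \<and> tgt e \<in> states E \<and> \<Phi> (lab e)}"
  have gwe: "gw g (lab e) (gd g (lab e))" if "e \<in> AE" "fst e = x" for e
    using edge_gw[OF xg that] gd by blast
  have "?L = f ` ?R"
  proof
    show "f ` ?R \<subseteq> ?L"
    proof
      fix t assume "t \<in> f ` ?R"
      then obtain e where e: "e \<in> AE" "fst e = x" "\<Phi> (lab e)" "t = f e" by blast
      have "t \<in> AEd" unfolding AEd_def f_def e(4) using xg e(1,2) gwe[OF e(1,2)] by blast
      moreover have "cq (x,g) \<in> RH" using QRH xg by blast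
      moreover have "(tgt e, gd g (lab e)) \<in> Q" using AEd_Q[OF xg e(1,2) gwe[OF e(1,2)]] .
      ultimately show "t \<in> ?L" unfolding EH_def Af_def using e unfolding f_def by auto
    qed
    show "?L \<subseteq> f ` ?R"
    proof
      fix t assume t: "t \<in> ?L"
      then have tA: "t \<in> Af" unfolding EH_def by auto
      show "t \<in> f ` ?R"
        using tA
      proof (cases rule: Af_cases)
        case (Ed x' g' e g2)
        then have xg': "x' = x" "g' = g" using t by auto
        have "gd g (lab e) = g2" using gd Ed xg' by blast
        then have "t = f e" using Ed xg' unfolding f_def by simp
        moreover have "e \<in> ?R" using Ed xg' t AE_props by auto
        ultimately show ?thesis by blast
      next
        case (Es x' g' w g2)
        then show ?thesis using t by auto
      next
        case (Ge e)
        then show ?thesis using t by auto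
      qed
    qed
  qed
  moreover have "inj_on f ?R"
  proof
    fix e1 e2 assume e1: "e1 \<in> ?R" and e2: "e2 \<in> ?R" and fe: "f e1 = f e2"
    then have "lab e1 = lab e2" unfolding f_def by simp
    then have "prefix (lab e1) (lab e2)" by simp
    moreover have "e1 \<in> AE" "e2 \<in> AE" "fst e1 = fst e2" using e1 e2 by auto
    ultimately show "e1 = e2" using tdE unfolding tdet_def by blast
  qed
  ultimately show ?thesis by (simp add: card_image)
qed

lemma dist_match:
  assumes xg: "(x,g) \<in> Q"
  shows "eta_dist \<Sigma>1 Hc (cq ` Q) (cq (x,g)) = eta_dist \<Sigma>1 E (states E) x"
        "omega_dist \<Sigma>1 Hc (cq ` Q) (cq (x,g)) = omega_dist \<Sigma>1 E (states E) x"
proof -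
  show "eta_dist \<Sigma>1 Hc (cq ` Q) (cq (x,g)) = eta_dist \<Sigma>1 E (states E) x"
  proof
    fix l
    show "eta_dist \<Sigma>1 Hc (cq ` Q) (cq (x,g)) l = eta_dist \<Sigma>1 E (states E) x l"
      unfolding eta_dist_t[OF Hc_props(3)] eta_dist_t[OF dE] Hc_props
      using card_match[OF xg, of "\<lambda>w. length w = l \<and> even_word \<Sigma>1 w"] by simp
  qed
  show "omega_dist \<Sigma>1 Hc (cq ` Q) (cq (x,g)) = omega_dist \<Sigma>1 E (states E) x"
  proof
    fix l
    show "omega_dist \<Sigma>1 Hc (cq ` Q) (cq (x,g)) l = omega_dist \<Sigma>1 E (states E) x l"
      unfolding omega_dist_t[OF Hc_props(3)] omega_dist_t[OF dE] Hc_props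
      using card_match[OF xg, of "\<lambda>w. length w = l \<and> \<not> even_word \<Sigma>1 w"] by simp
  qed
qed

lemma vle_princ:
  assumes x: "x \<in> states E"
  defines "\<eta> \<equiv> eta_dist \<Sigma>1 E (states E) x" and "\<omega> \<equiv> omega_dist \<Sigma>1 E (states E) x"
  shows "Kplus n0 n1 \<eta> \<omega> (rmax \<eta> \<omega>) \<le> - \<bar>Kminus n0 n1 \<eta> \<omega> (rmax \<eta> \<omega>)\<bar> \<and>
        (\<forall>l\<in>{1..<rmax \<eta> \<omega>}. Kplus n0 n1 \<eta> \<omega> l \<ge> \<bar>Kminus n0 n1 \<eta> \<omega> l\<bar>)"
proof -
  let ?R = "rmax \<eta> \<omega>"
  have c: "(\<Sum>l=1..?R. real (\<eta> l + \<omega> l) / real (n0 + n1) ^ l) = 1"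
     "\<forall>l\<ge>1. Kplus n0 n1 \<eta> \<omega> l \<ge> \<bar>Kminus n0 n1 \<eta> \<omega> l\<bar>"
    using VLE x unfolding is_VLE_def \<eta>_def \<omega>_def Let_def by auto
  have R1: "?R \<ge> 1"
  proof (rule ccontr)
    assume "\<not> ?R \<ge> 1" then have "?R = 0" by simp
    then show False using c(1) by simp
  qed
  have "(\<Sum>l=1..?R. real_of_int (int (\<eta> l) + int (\<omega> l)) / real_of_int (int n0 + int n1) ^ l) = 1"
    using c(1) by simp
  then have P0: "Kplus n0 n1 \<eta> \<omega> ?R = 0"
    unfolding Kplus_def using Kfun_zero_iff[of "int n0 + int n1" ?R] n0pos by simp
  then have "Kminus n0 n1 \<eta> \<omega> ?R = 0" using c(2) R1 by force
  then show ?thesis using P0 c(2) by auto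
qed

lemma Hc_princ: "principal_states \<Sigma>1 n0 n1 Hc (cq ` Q)"
  unfolding principal_states_def
proof (intro conjI ballI)
  show "cq ` Q \<noteq> {}" using q0Q by blast
  show "cq ` Q \<subseteq> states Hc" using QRH Hc_props by simp
  fix s assume "s \<in> cq ` Q"
  then obtain x g where xg: "s = cq (x,g)" "(x,g) \<in> Q" by auto
  show "let \<eta> = eta_dist \<Sigma>1 Hc (cq ` Q) s; \<omega> = omega_dist \<Sigma>1 Hc (cq ` Q) s; r = rmax \<eta> \<omega>
        in Kplus n0 n1 \<eta> \<omega> r \<le> - \<bar>Kminus n0 n1 \<eta> \<omega> r\<bar> \<and> (\<forall>l\<in>{1..<r}. \<bar>Kminus n0 n1 \<eta> \<omega> l\<bar> \<le> Kplus n0 n1 \<eta> \<omega> l)"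
    unfolding Let_def xg(1) dist_match[OF xg(2)] using vle_princ Q_G(2)[OF xg(2)] by blast
qed

lemma dir1: "\<exists>H. is_vlg \<Sigma> H \<and> strongly_connected H \<and> deterministic H \<and> max_edge_len_le H r \<and>
              vlg_constraint H = S \<and> (\<exists>V'. principal_states \<Sigma>1 n0 n1 H V')"
  using Hc_vlg Hc_sc Hc_det Hc_ml Hc_con Hc_princ by blast

end


theorem theorem5:
  fixes \<Sigma> \<Sigma>0 \<Sigma>1 :: "'a set" and S :: "'a list set" and n0 n1 r :: nat
  assumes "finite \<Sigma>"
    and "irreducible_constraint \<Sigma> S"
    and "is_partition2 \<Sigma> \<Sigma>0 \<Sigma>1"
    and "n0 > 0" and "n1 > 0" and "r > 0"
  shows "(\<exists>E. is_VLE \<Sigma> \<Sigma>1 S n0 n1 E \<and> deterministic E \<and> max_edge_len_le E r) \<longleftrightarrow>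
         (\<exists>H. is_vlg \<Sigma> H \<and> strongly_connected H \<and> deterministic H \<and> max_edge_len_le H r \<and>
              vlg_constraint H = S \<and> (\<exists>V'. principal_states \<Sigma>1 n0 n1 H V'))"
proof
  assume "\<exists>E. is_VLE \<Sigma> \<Sigma>1 S n0 n1 E \<and> deterministic E \<and> max_edge_len_le E r"
  then obtain E where E: "is_VLE \<Sigma> \<Sigma>1 S n0 n1 E" "deterministic E" "max_edge_len_le E r" by blast
  obtain G where G: "is_vlg \<Sigma> G" "\<forall>i\<in>eids G. length (elab G i) = 1" "deterministic G"
    "strongly_connected G" "S = path_words G"
    using assms(2) unfolding irreducible_constraint_def by blast
  interpret dirone \<Sigma> \<Sigma>1 S n0 n1 r E G
    using assms(1,4,6) E G by unfold_locales
  show "\<exists>H. is_vlg \<Sigma> H \<and> strongly_connected H \<and> deterministic H \<and> max_edge_len_le H r \<and>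
              vlg_constraint H = S \<and> (\<exists>V'. principal_states \<Sigma>1 n0 n1 H V')"
    by (rule dir1)
next
  assume "\<exists>H. is_vlg \<Sigma> H \<and> strongly_connected H \<and> deterministic H \<and> max_edge_len_le H r \<and>
              vlg_constraint H = S \<and> (\<exists>V'. principal_states \<Sigma>1 n0 n1 H V')"
  then obtain H V' where H: "is_vlg \<Sigma> H" "deterministic H" "max_edge_len_le H r"
      "vlg_constraint H = S" "principal_states \<Sigma>1 n0 n1 H V'" by blast
  show "\<exists>E. is_VLE \<Sigma> \<Sigma>1 S n0 n1 E \<and> deterministic E \<and> max_edge_len_le E r"
    using dir2[OF assms(4) H] .
qed

end
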